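(* Let $G>0$, $w_0>0$ and $\theta\in\mathbb{R}$, and let $g(t)=G\sin(w_0t+\theta)$. For $i=1,2,3,\dots$ let $$x_i(t)=G F_i\sin(w_0t+\phi_i+\theta)+n_i(t),$$ where the triples $(F_i,\phi_i,n_i(\cdot))$ are independent and identically distributed across $i$; for each $i$, the random variables $F_i$, $\phi_i$ and the noise process $n_i(\cdot)$ are mutually independent; $F_i$ is real-valued with $E|F_i|<\infty$; $\phi_i$ is uniformly distributed on $[-\pi,\pi]$; and for each $t$, $n_i(t)$ is integrable with $E[n_i(t)]=0$. For $M\ge 1$ let $X^+_M=\{i\in\{1,\dots,M\}: |\phi_i|\le \pi/2\}$ and let $\overline{X^+_M}$ denote its cardinality. Then there is a constant $c$ (not depending on $t$) such that for every $t$, $$\hat g_M(t)=\frac{1}{\overline{X^+_M}}\sum_{i\in X^+_M}x_i(t)\longrightarrow c\,g(t)\quad\text{almost surely as } M\to\infty$$ (so that $\overline{X^+_M}\to\infty$).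
   Context: Each $x_i$ models the noisy output of a linear time-invariant channel with magnitude response $F_i$ and phase response $\phi_i$ at frequency $w_0$, driven by the common input $g$; the estimator averages only over the channels whose phase lag lies in $[-\pi/2,\pi/2]$. *)

theory Defs
  imports "HOL-Probability.Probability"
begin

definition sig_in :: "real \<Rightarrow> real \<Rightarrow> real \<Rightarrow> real \<Rightarrow> real" where
  "sig_in G w0 \<theta> t = G * sin (w0 * t + \<theta>)"

definition chan_out :: "real \<Rightarrow> real \<Rightarrow> real \<Rightarrow> (nat \<Rightarrow> 'a \<Rightarrow> real) \<Rightarrow> (nat \<Rightarrow> 'a \<Rightarrow> real)
    \<Rightarrow> (nat \<Rightarrow> 'a \<Rightarrow> real \<Rightarrow> real) \<Rightarrow> nat \<Rightarrow> real \<Rightarrow> 'a \<Rightarrow> real" where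
  "chan_out G w0 \<theta> F \<phi> n i t \<omega> = G * F i \<omega> * sin (w0 * t + \<phi> i \<omega> + \<theta>) + n i \<omega> t"

definition Xplus :: "(nat \<Rightarrow> 'a \<Rightarrow> real) \<Rightarrow> nat \<Rightarrow> 'a \<Rightarrow> nat set" where
  "Xplus \<phi> m \<omega> = {i \<in> {1..m}. \<bar>\<phi> i \<omega>\<bar> \<le> pi / 2}"

text \<open>The estimator; division by zero yields 0 in Isabelle (irrelevant for the limit).\<close>
definition g_hat :: "real \<Rightarrow> real \<Rightarrow> real \<Rightarrow> (nat \<Rightarrow> 'a \<Rightarrow> real) \<Rightarrow> (nat \<Rightarrow> 'a \<Rightarrow> real)
    \<Rightarrow> (nat \<Rightarrow> 'a \<Rightarrow> real \<Rightarrow> real) \<Rightarrow> nat \<Rightarrow> real \<Rightarrow> 'a \<Rightarrow> real" where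
  "g_hat G w0 \<theta> F \<phi> n m t \<omega> =
     (\<Sum>i\<in>Xplus \<phi> m \<omega>. chan_out G w0 \<theta> F \<phi> n i t \<omega>) / real (card (Xplus \<phi> m \<omega>))"

abbreviation path_space :: "(real \<Rightarrow> real) measure" where
  "path_space \<equiv> PiM UNIV (\<lambda>_::real. borel)"

abbreviation triple_space :: "(real \<times> real \<times> (real \<Rightarrow> real)) measure" where
  "triple_space \<equiv> borel \<Otimes>\<^sub>M borel \<Otimes>\<^sub>M path_space"

text \<open>Events generated by a random variable X : M -> N (as in the library's indep_vars_def2).
  Used to state mutual independence of random variables of different types.\<close>
definition rv_events :: "'a measure \<Rightarrow> 'b measure \<Rightarrow> ('a \<Rightarrow> 'b) \<Rightarrow> 'a set set" where
  "rv_events M N X = {X -` A \<inter> space M | A. A \<in> sets N}"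

end

theory Submission
  imports Defs
begin

lemma tail_inv_sq_aux:
  fixes x :: real assumes "x > 0"
  shows "(\<Sum>j<K. if x \<le> real (Suc j) then 1 / (real (Suc j))\<^sup>2 else 0)
         \<le> (if x \<le> real K then 2 / x - 2 / real (Suc K) else 0)"
proof (induction K)
  case 0 then show ?case using assms by simp
next
  case (Suc K)
  have key: "1 / (real (Suc K))\<^sup>2 \<le> 2 / real (Suc K) - 2 / real (Suc (Suc K))"
  proof -
    define k where "k = real K"
    have k0: "k \<ge> 0" unfolding k_def by simp
    have e: "2 / real (Suc K) - 2 / real (Suc (Suc K)) = 2 / ((k+1)*(k+2))"
      unfolding k_def by (simp add: field_simps)
    have "1 / (real (Suc K))\<^sup>2 = 1 / ((k+1)*(k+1))" unfolding k_def by (simp add: power2_eq_square algebra_simps)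
    also have "\<dots> \<le> 2 / ((k+1)*(k+2))" using k0 by (simp add: divide_simps)
    finally show ?thesis using e by simp
  qed
  show ?case
  proof (cases "x \<le> real K")
    case True
    then show ?thesis using Suc key by simp
  next
    case False
    note F = this
    show ?thesis
    proof (cases "x \<le> real (Suc K)")
      case True
      have "2 / real (Suc K) \<le> 2 / x" using assms True by (simp add: frac_le)
      then show ?thesis using Suc F True key by simp
    next
      case False
      then show ?thesis using Suc F by simp
    qed
  qed
qed

lemma tail_inv_sq:
  fixes x :: real assumes "x \<ge> 0"
  shows "(\<Sum>j<K. if x \<le> real (Suc j) then x\<^sup>2 / (real (Suc j))\<^sup>2 else 0) \<le> 2 * x"
proof (cases "x = 0")
  case True then show ?thesis by simp
next
  case False
  then have xp: "x > 0" using assms by simp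
  have "(\<Sum>j<K. if x \<le> real (Suc j) then x\<^sup>2 / (real (Suc j))\<^sup>2 else 0)
      = x\<^sup>2 * (\<Sum>j<K. if x \<le> real (Suc j) then 1 / (real (Suc j))\<^sup>2 else 0)"
    by (subst sum_distrib_left) (auto intro!: sum.cong)
  also have "\<dots> \<le> x\<^sup>2 * (2 / x)"
  proof (rule mult_left_mono)
    show "(\<Sum>j<K. if x \<le> real (Suc j) then 1 / (real (Suc j))\<^sup>2 else 0) \<le> 2 / x"
    proof (cases "x \<le> real K")
      case True
      then have "(\<Sum>j<K. if x \<le> real (Suc j) then 1 / (real (Suc j))\<^sup>2 else 0) \<le> 2 / x - 2 / real (Suc K)"
        using tail_inv_sq_aux[OF xp, of K] by simp
      moreover have "0 \<le> 2 / real (Suc K)" by simp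
      ultimately show ?thesis by linarith
    next
      case False
      then have "(\<Sum>j<K. if x \<le> real (Suc j) then 1 / (real (Suc j))\<^sup>2 else 0) \<le> 0"
        using tail_inv_sq_aux[OF xp, of K] by simp
      moreover have "0 \<le> 2 / x" using xp by simp
      ultimately show ?thesis by linarith
    qed
  qed simp
  also have "\<dots> = 2 * x" using xp by (simp add: power2_eq_square)
  finally show ?thesis .
qed

lemma geo_tail_aux:
  fixes \<beta> z :: real assumes "0 < \<beta>" "\<beta> < 1" "z > 0"
  shows "(\<Sum>n<N. if \<beta> ^ n \<le> z then \<beta> ^ n else 0) \<le> max 0 (z - \<beta> ^ N) / (1 - \<beta>)"
proof (induction N)
  case 0 then show ?case using assms by (simp add: divide_nonneg_pos)
next
  case (Suc N)
  have mono: "\<beta> ^ Suc N \<le> \<beta> ^ N" using assms by (simp add: power_decreasing mult_le_cancel_right1 less_imp_le)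
  show ?case
  proof (cases "\<beta> ^ N \<le> z")
    case True
    have "(\<Sum>n<Suc N. if \<beta> ^ n \<le> z then \<beta> ^ n else 0) \<le> max 0 (z - \<beta> ^ N) / (1 - \<beta>) + \<beta> ^ N"
      using Suc True by simp
    also have "\<dots> = (z - \<beta> ^ Suc N) / (1 - \<beta>)" using True assms
      by (simp add: field_simps)
    also have "\<dots> \<le> max 0 (z - \<beta> ^ Suc N) / (1 - \<beta>)" using assms
      by (intro divide_right_mono) (auto simp del: power_Suc)
    finally show ?thesis .
  next
    case False
    have "(\<Sum>n<Suc N. if \<beta> ^ n \<le> z then \<beta> ^ n else 0) \<le> max 0 (z - \<beta> ^ N) / (1 - \<beta>)"
      using Suc False by simp
    also have "\<dots> \<le> max 0 (z - \<beta> ^ Suc N) / (1 - \<beta>)" using assms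
      by (intro divide_right_mono max.mono) (use mono in auto)
    finally show ?thesis .
  qed
qed

lemma geo_tail:
  fixes \<beta> z :: real assumes "0 < \<beta>" "\<beta> < 1" "z > 0"
  shows "(\<Sum>n<N. if \<beta> ^ n \<le> z then \<beta> ^ n else 0) \<le> z / (1 - \<beta>)"
proof -
  have "max 0 (z - \<beta> ^ N) \<le> z" using assms by auto
  then have "max 0 (z - \<beta> ^ N) / (1 - \<beta>) \<le> z / (1 - \<beta>)" using assms
    by (intro divide_right_mono) auto
  then show ?thesis using geo_tail_aux[OF assms, of N] by linarith
qed

lemma cesaro:
  fixes a :: "nat \<Rightarrow> real"
  assumes "a \<longlonglongrightarrow> \<mu>"
  shows "(\<lambda>k. (\<Sum>j<k. a j) / real k) \<longlonglongrightarrow> \<mu>"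
proof -
  define b where "b j = a j - \<mu>" for j
  have b0: "b \<longlonglongrightarrow> 0" using assms unfolding b_def by (simp add: LIM_zero)
  have "(\<lambda>k. (\<Sum>j<k. b j) / real k) \<longlonglongrightarrow> 0"
  proof (rule LIMSEQ_I)
    fix r :: real assume r: "r > 0"
    obtain N where N: "\<And>j. j \<ge> N \<Longrightarrow> norm (b j) < r / 2"
      using LIMSEQ_D[OF b0, of "r/2"] r by auto
    define B where "B = (\<Sum>j<N. \<bar>b j\<bar>)"
    have B0: "B \<ge> 0" unfolding B_def by (simp add: sum_nonneg)
    obtain K :: nat where K: "K > 2 * B / r" using reals_Archimedean2 by blast
    show "\<exists>no. \<forall>k\<ge>no. norm ((\<Sum>j<k. b j) / real k - 0) < r"
    proof (intro exI allI impI)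
      fix k assume k: "k \<ge> max (Suc N) (Suc K)"
      then have kN: "k \<ge> N" and kp: "real k > 0" and kK: "real k > 2 * B / r" using K by auto
      have split: "{..<k} = {..<N} \<union> {N..<k}" using kN by auto
      have "\<bar>\<Sum>j<k. b j\<bar> \<le> (\<Sum>j<k. \<bar>b j\<bar>)" by (rule sum_abs)
      also have "\<dots> = B + (\<Sum>j\<in>{N..<k}. \<bar>b j\<bar>)" unfolding B_def split
        by (subst sum.union_disjoint) auto
      also have "(\<Sum>j\<in>{N..<k}. \<bar>b j\<bar>) \<le> (\<Sum>j\<in>{N..<k}. r / 2)"
        using N by (intro sum_mono) (auto intro: less_imp_le)
      also have "\<dots> \<le> real k * (r / 2)" using r by simp
      finally have "\<bar>\<Sum>j<k. b j\<bar> \<le> B + real k * (r / 2)" by simp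
      moreover have "B < real k * (r / 2)" using kK r by (simp add: field_simps)
      ultimately have "\<bar>\<Sum>j<k. b j\<bar> < real k * r" by linarith
      then show "norm ((\<Sum>j<k. b j) / real k - 0) < r" using kp
        by (simp add: field_simps)
    qed
  qed
  moreover have "(\<Sum>j<k. b j) / real k = (\<Sum>j<k. a j) / real k - (if k = 0 then 0 else \<mu>)" for k
    unfolding b_def by (simp add: sum_subtractf field_simps)
  ultimately have "(\<lambda>k. (\<Sum>j<k. a j) / real k - (if k = 0 then 0 else \<mu>)) \<longlonglongrightarrow> 0" by simp
  moreover have "(\<lambda>k. (if k = 0 then 0 else \<mu>)) \<longlonglongrightarrow> \<mu>"
    by (rule LIMSEQ_offset[where k=1]) simp
  ultimately have "(\<lambda>k. (\<Sum>j<k. a j) / real k - (if k = 0 then 0 else \<mu>) + (if k = 0 then 0 else \<mu>)) \<longlonglongrightarrow> 0 + \<mu>"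
    by (intro tendsto_add)
  then show ?thesis by simp
qed

definition kseq :: "real \<Rightarrow> nat \<Rightarrow> nat" where
  "kseq \<alpha> n = nat \<lfloor>\<alpha> ^ n\<rfloor>"

lemma floor_half: fixes y :: real assumes "y \<ge> 1" shows "y / 2 \<le> real (nat \<lfloor>y\<rfloor>)"
proof (cases "y \<ge> 2")
  case True
  have "y - 1 < of_int \<lfloor>y\<rfloor>" by linarith
  moreover have "of_int \<lfloor>y\<rfloor> = real (nat \<lfloor>y\<rfloor>)" using assms by simp
  ultimately show ?thesis using True by linarith
next
  case False
  have "1 \<le> \<lfloor>y\<rfloor>" using assms by linarith
  then have "1 \<le> real (nat \<lfloor>y\<rfloor>)" by linarith
  then show ?thesis using False by linarith
qed

lemma kseq_props:
  assumes "\<alpha> > 1"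
  shows "kseq \<alpha> n \<ge> 1" and "real (kseq \<alpha> n) \<le> \<alpha> ^ n" and "\<alpha> ^ n / 2 \<le> real (kseq \<alpha> n)"
proof -
  have a1: "\<alpha> ^ n \<ge> 1" using assms by simp
  then show "kseq \<alpha> n \<ge> 1" unfolding kseq_def by linarith
  show "real (kseq \<alpha> n) \<le> \<alpha> ^ n" unfolding kseq_def using a1 by linarith
  show "\<alpha> ^ n / 2 \<le> real (kseq \<alpha> n)" unfolding kseq_def by (rule floor_half[OF a1])
qed

lemma kseq_mono: assumes "\<alpha> > 1" shows "mono (kseq \<alpha>)"
proof (rule monoI)
  fix m n :: nat assume "m \<le> n"
  then have "\<alpha> ^ m \<le> \<alpha> ^ n" using assms by (simp add: power_increasing)
  then show "kseq \<alpha> m \<le> kseq \<alpha> n" unfolding kseq_def by (intro nat_mono floor_mono)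
qed

lemma kseq_at_top: assumes "\<alpha> > 1" shows "filterlim (kseq \<alpha>) at_top sequentially"
proof -
  have "filterlim (\<lambda>n. real (kseq \<alpha> n)) at_top sequentially"
    unfolding filterlim_at_top
  proof
    fix Z :: real
    show "eventually (\<lambda>n. Z \<le> real (kseq \<alpha> n)) sequentially"
      using Archimedean_eventually_pow[OF assms, of "2*Z"]
    proof eventually_elim
      case (elim n) then show ?case using kseq_props(3)[OF assms, of n] by linarith
    qed
  qed
  then show ?thesis by (simp add: filterlim_sequentially_iff_filterlim_real)
qed

lemma kseq_ratio: assumes "\<alpha> > 1"
  shows "eventually (\<lambda>n. real (kseq \<alpha> (Suc n)) \<le> \<alpha>\<^sup>2 * real (kseq \<alpha> n)) sequentially"
proof -
  have "filterlim (\<lambda>n. \<alpha> ^ n) at_top sequentially"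
    unfolding filterlim_at_top using Archimedean_eventually_pow[OF assms]
    by (metis (mono_tags, lifting) eventually_mono less_imp_le)
  then have "eventually (\<lambda>n. \<alpha> ^ n \<ge> \<alpha> / (\<alpha> - 1)) sequentially"
    by (simp add: filterlim_at_top)
  then show ?thesis
  proof eventually_elim
    case (elim n)
    have am1: "\<alpha> - 1 > 0" using assms by simp
    have "\<alpha> ^ n * (\<alpha> - 1) \<ge> \<alpha>" using elim am1 by (simp add: field_simps)
    then have "\<alpha> ^ n - 1 \<ge> \<alpha> ^ n / \<alpha>" using assms by (simp add: field_simps)
    moreover have "real (kseq \<alpha> n) \<ge> \<alpha> ^ n - 1" unfolding kseq_def
      using assms by (simp add: of_nat_nat)
    ultimately have "real (kseq \<alpha> n) \<ge> \<alpha> ^ n / \<alpha>" by linarith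
    then have "\<alpha>\<^sup>2 * real (kseq \<alpha> n) \<ge> \<alpha>\<^sup>2 * (\<alpha> ^ n / \<alpha>)" using assms
      by (intro mult_left_mono) auto
    also have "\<alpha>\<^sup>2 * (\<alpha> ^ n / \<alpha>) = \<alpha> ^ Suc n" using assms by (simp add: power2_eq_square)
    finally show ?case using kseq_props(2)[OF assms, of "Suc n"] by linarith
  qed
qed

lemma sandwich_core:
  fixes S :: "nat \<Rightarrow> real" and k :: "nat \<Rightarrow> nat"
  assumes Smono: "mono S" and S0: "\<And>m. S m \<ge> 0"
    and kmono: "mono k" and kpos: "\<And>n. k n \<ge> 1" and ktop: "filterlim k at_top sequentially"
    and kratio: "eventually (\<lambda>n. real (k (Suc n)) \<le> c * real (k n)) sequentially"
    and c1: "c \<ge> 1"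
    and lim: "(\<lambda>n. S (k n) / real (k n)) \<longlonglongrightarrow> \<mu>"
    and \<delta>: "\<delta> > 0"
  shows "eventually (\<lambda>m. S m / real m \<le> (\<mu> + \<delta>) * c \<and> (\<mu> - \<delta>) / c \<le> S m / real m) sequentially"
proof -
  have "eventually (\<lambda>n. \<bar>S (k n) / real (k n) - \<mu>\<bar> < \<delta>) sequentially"
    using lim \<delta> by (auto simp: tendsto_iff dist_real_def)
  with kratio have "eventually (\<lambda>n. \<bar>S (k n) / real (k n) - \<mu>\<bar> < \<delta> \<and> real (k (Suc n)) \<le> c * real (k n)) sequentially"
    by eventually_elim auto
  then obtain N0 where N0: "\<And>n. n \<ge> N0 \<Longrightarrow> \<bar>S (k n) / real (k n) - \<mu>\<bar> < \<delta> \<and> real (k (Suc n)) \<le> c * real (k n)"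
    by (auto simp: eventually_sequentially)
  have mu0: "\<mu> \<ge> 0"
    by (rule tendsto_lowerbound[OF lim]) (auto intro!: always_eventually divide_nonneg_nonneg S0)
  show ?thesis unfolding eventually_sequentially
  proof (intro exI allI impI)
    fix m assume m: "m \<ge> k N0"
    then have m1: "m \<ge> 1" using kpos[of N0] by linarith
    have ex: "\<exists>n. m < k n" using ktop by (auto simp: filterlim_at_top eventually_sequentially) (metis le_refl Suc_le_eq)
    define n' where "n' = (LEAST n. m < k n)"
    have n'1: "m < k n'" unfolding n'_def by (rule LeastI_ex[OF ex])
    have n'2: "\<not> m < k n" if "n < n'" for n using not_less_Least[OF that[unfolded n'_def]] by blast
    have "n' > N0"
    proof (rule ccontr)
      assume "\<not> N0 < n'"
      then have "k n' \<le> k N0" using kmono by (simp add: monoD)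
      then show False using n'1 m by linarith
    qed
    then obtain n where n: "n' = Suc n" "n \<ge> N0" by (cases n') auto
    have kn: "k n \<le> m" using n'2[of n] n by simp
    have kn1: "m \<le> k (Suc n)" using n'1 n by simp
    have knpos: "real (k n) > 0" using kpos[of n] by simp
    have mpos: "real m > 0" using m1 by simp
    from N0[OF n(2)] have A: "\<bar>S (k n) / real (k n) - \<mu>\<bar> < \<delta>" and B: "real (k (Suc n)) \<le> c * real (k n)" by auto
    from N0[of "Suc n"] n(2) have A1: "\<bar>S (k (Suc n)) / real (k (Suc n)) - \<mu>\<bar> < \<delta>" by auto
    have k1pos: "real (k (Suc n)) > 0" using kpos[of "Suc n"] by simp
    have up: "S m \<le> (\<mu> + \<delta>) * c * real m"
    proof -
      have "S m \<le> S (k (Suc n))" using Smono kn1 by (simp add: monoD)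
      also have "S (k (Suc n)) \<le> (\<mu> + \<delta>) * real (k (Suc n))"
        using A1 k1pos by (simp add: abs_less_iff field_simps)
      also have "\<dots> \<le> (\<mu> + \<delta>) * (c * real (k n))" using B mu0 \<delta> by (intro mult_left_mono) auto
      also have "\<dots> \<le> (\<mu> + \<delta>) * (c * real m)" using kn mu0 \<delta> c1 by (intro mult_left_mono) auto
      finally show ?thesis by (simp add: mult.assoc)
    qed
    have low: "(\<mu> - \<delta>) * real m \<le> c * S m"
    proof (cases "\<mu> - \<delta> \<ge> 0")
      case True
      have "(\<mu> - \<delta>) * real m \<le> (\<mu> - \<delta>) * real (k (Suc n))" using kn1 True by (intro mult_left_mono) auto
      also have "\<dots> \<le> (\<mu> - \<delta>) * (c * real (k n))" using B True by (intro mult_left_mono) auto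
      also have "\<dots> = c * ((\<mu> - \<delta>) * real (k n))" by simp
      also have "(\<mu> - \<delta>) * real (k n) \<le> S (k n)" using A knpos by (simp add: abs_less_iff field_simps)
      also have "S (k n) \<le> S m" using Smono kn by (simp add: monoD)
      finally show ?thesis using c1 by simp
    next
      case False
      then have "(\<mu> - \<delta>) * real m \<le> 0" using mpos by (simp add: mult_nonpos_nonneg)
      also have "0 \<le> c * S m" using c1 S0[of m] by simp
      finally show ?thesis .
    qed
    show "S m / real m \<le> (\<mu> + \<delta>) * c \<and> (\<mu> - \<delta>) / c \<le> S m / real m"
      using up low mpos c1 by (simp add: field_simps)
  qed
qed

lemma sandwich:
  fixes S :: "nat \<Rightarrow> real"
  assumes Smono: "mono S" and S0: "\<And>m. S m \<ge> 0"
    and lim: "\<And>r. (\<lambda>n. S (kseq (1 + 1 / real (Suc r)) n) / real (kseq (1 + 1 / real (Suc r)) n)) \<longlonglongrightarrow> \<mu>"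
  shows "(\<lambda>m. S m / real m) \<longlonglongrightarrow> \<mu>"
proof -
  define a where "a r = 1 + 1 / real (Suc r)" for r
  have a1: "a r > 1" for r unfolding a_def by simp
  have mu0: "\<mu> \<ge> 0"
    by (rule tendsto_lowerbound[OF lim[of 0]]) (auto intro!: always_eventually divide_nonneg_nonneg S0)
  have "(\<lambda>r. 1 + 1 / real (Suc r)) \<longlonglongrightarrow> 1 + 0"
    by (intro tendsto_add tendsto_const) (use LIMSEQ_inverse_real_of_nat in \<open>simp add: inverse_eq_divide\<close>)
  then have alim: "(\<lambda>r. (a r)\<^sup>2) \<longlonglongrightarrow> 1" unfolding a_def
    using tendsto_power[of "\<lambda>r. 1 + 1 / real (Suc r)" 1 sequentially 2] by simp
  show ?thesis
  proof (rule LIMSEQ_I)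
    fix \<epsilon> :: real assume \<epsilon>: "\<epsilon> > 0"
    have "eventually (\<lambda>r. \<bar>(a r)\<^sup>2 - 1\<bar> < min 1 (\<epsilon> / (4 * (\<mu> + 1)))) sequentially"
    proof -
      have "min 1 (\<epsilon> / (4 * (\<mu> + 1))) > 0" using \<epsilon> mu0 by simp
      then show ?thesis using alim unfolding tendsto_iff dist_real_def by blast
    qed
    then obtain r where r: "\<bar>(a r)\<^sup>2 - 1\<bar> < min 1 (\<epsilon> / (4 * (\<mu> + 1)))"
      by (auto simp: eventually_sequentially)
    define c where "c = (a r)\<^sup>2"
    have c1: "c \<ge> 1" unfolding c_def using a1[of r] by (simp add: one_le_power)
    have c2: "c < 2" using r unfolding c_def by auto
    have cmu: "(\<mu> + 1) * (c - 1) \<le> \<epsilon> / 4"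
    proof -
      have "c - 1 \<le> \<epsilon> / (4 * (\<mu> + 1))" using r c1 unfolding c_def by auto
      then have "(\<mu> + 1) * (c - 1) \<le> (\<mu> + 1) * (\<epsilon> / (4 * (\<mu> + 1)))"
        using mu0 by (intro mult_left_mono) auto
      also have "\<dots> = \<epsilon> / 4" using mu0 by (simp add: field_simps)
      finally show ?thesis .
    qed
    define \<delta> where "\<delta> = \<epsilon> / 4"
    have \<delta>: "\<delta> > 0" unfolding \<delta>_def using \<epsilon> by simp
    have ev: "eventually (\<lambda>m. S m / real m \<le> (\<mu> + \<delta>) * c \<and> (\<mu> - \<delta>) / c \<le> S m / real m) sequentially"
      unfolding c_def
    proof (rule sandwich_core[OF Smono S0 kseq_mono[OF a1] _ kseq_at_top[OF a1] kseq_ratio[OF a1]])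
      show "1 \<le> kseq (a r) n" for n using kseq_props(1)[OF a1] .
      show "1 \<le> (a r)\<^sup>2" using c1 unfolding c_def .
      show "(\<lambda>n. S (kseq (a r) n) / real (kseq (a r) n)) \<longlonglongrightarrow> \<mu>" using lim[of r] unfolding a_def .
    qed (rule \<delta>)
    then obtain M0 where M0: "\<And>m. m \<ge> M0 \<Longrightarrow> S m / real m \<le> (\<mu> + \<delta>) * c \<and> (\<mu> - \<delta>) / c \<le> S m / real m"
      by (auto simp: eventually_sequentially)
    show "\<exists>no. \<forall>m\<ge>no. norm (S m / real m - \<mu>) < \<epsilon>"
    proof (intro exI allI impI)
      fix m assume "m \<ge> M0"
      from M0[OF this] have up: "S m / real m \<le> (\<mu> + \<delta>) * c" and low: "(\<mu> - \<delta>) / c \<le> S m / real m" by auto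
      have "(\<mu> + \<delta>) * c = \<mu> + \<mu> * (c - 1) + \<delta> * c" by (simp add: algebra_simps)
      also have "\<mu> * (c - 1) \<le> (\<mu> + 1) * (c - 1)" using c1 by (intro mult_right_mono) auto
      also have "\<delta> * c \<le> \<delta> * 2" using c2 \<delta> by (intro mult_left_mono) auto
      finally have up2: "S m / real m < \<mu> + \<epsilon>" using up cmu \<epsilon> unfolding \<delta>_def by linarith
      have low2: "S m / real m > \<mu> - \<epsilon>"
      proof (cases "\<mu> - \<delta> \<ge> 0")
        case True
        have e1: "(\<mu> - \<delta>) / c = (\<mu> - \<delta>) - (\<mu> - \<delta>) * (c - 1) / c" using c1 by (simp add: field_simps)
        have e2: "(\<mu> - \<delta>) * (c - 1) / c \<le> (\<mu> - \<delta>) * (c - 1)"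
        proof -
          have nn: "0 \<le> (\<mu> - \<delta>) * (c - 1)" using True c1 by simp
          then have "(\<mu> - \<delta>) * (c - 1) \<le> (\<mu> - \<delta>) * (c - 1) * c" using c1 by (simp add: mult_le_cancel_left1)
          then show ?thesis using c1 by (simp add: divide_le_eq)
        qed
        have e3: "(\<mu> - \<delta>) * (c - 1) \<le> (\<mu> + 1) * (c - 1)" using c1 \<delta> by (intro mult_right_mono) auto
        have "(\<mu> - \<delta>) / c \<ge> \<mu> - \<delta> - \<epsilon> / 4" using e1 e2 e3 cmu by linarith
        then show ?thesis using low \<epsilon> unfolding \<delta>_def by linarith
      next
        case False
        have "S m / real m \<ge> 0" using S0[of m] by simp
        then show ?thesis using False \<epsilon> unfolding \<delta>_def by linarith
      qed
      show "norm (S m / real m - \<mu>) < \<epsilon>" using up2 low2 by (simp add: abs_less_iff)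
    qed
  qed
qed

lemma inner_geo_bound:
  assumes a: "\<alpha> > 1"
  shows "(\<Sum>n<N. if j < kseq \<alpha> n then 1 / (real (kseq \<alpha> n))\<^sup>2 else 0)
         \<le> 4 / ((1 - inverse (\<alpha>\<^sup>2)) * (real (Suc j))\<^sup>2)"
proof -
  define \<beta> where "\<beta> = inverse (\<alpha>\<^sup>2)"
  define z where "z = 1 / (real (Suc j))\<^sup>2"
  have \<beta>0: "0 < \<beta>" and \<beta>1: "\<beta> < 1" unfolding \<beta>_def using a
    by (auto simp: inverse_less_1_iff one_less_power)
  have z0: "z > 0" unfolding z_def by simp
  have pw: "\<beta> ^ n = 1 / (\<alpha> ^ n)\<^sup>2" for n
    unfolding \<beta>_def by (simp add: power_inverse divide_inverse power_mult_distrib flip: power_mult)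
      (simp add: mult.commute power_mult)
  have trm: "(if j < kseq \<alpha> n then 1 / (real (kseq \<alpha> n))\<^sup>2 else 0)
          \<le> 4 * (if \<beta> ^ n \<le> z then \<beta> ^ n else 0)" for n
  proof (cases "j < kseq \<alpha> n")
    case True
    have an: "\<alpha> ^ n > 0" using a by simp
    have k1: "real (Suc j) \<le> real (kseq \<alpha> n)" using True by simp
    have k2: "real (kseq \<alpha> n) \<le> \<alpha> ^ n" "\<alpha> ^ n / 2 \<le> real (kseq \<alpha> n)" using kseq_props[OF a] by auto
    have "(real (Suc j))\<^sup>2 \<le> (\<alpha> ^ n)\<^sup>2" using k1 k2 by (intro power_mono) auto
    then have bz: "\<beta> ^ n \<le> z" unfolding pw z_def using an a by (intro divide_left_mono) (auto simp: zero_less_mult_iff)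
    have "(\<alpha> ^ n / 2)\<^sup>2 \<le> (real (kseq \<alpha> n))\<^sup>2" using k2 an by (intro power_mono) auto
    then have "1 / (real (kseq \<alpha> n))\<^sup>2 \<le> 1 / (\<alpha> ^ n / 2)\<^sup>2" using an a kseq_props(1)[OF a, of n] by (intro divide_left_mono) (auto simp: zero_less_mult_iff)
    also have "\<dots> = 4 * \<beta> ^ n" unfolding pw by (simp add: power_divide)
    finally show ?thesis using True bz by simp
  qed (use \<beta>0 in simp)
  have "(\<Sum>n<N. if j < kseq \<alpha> n then 1 / (real (kseq \<alpha> n))\<^sup>2 else 0)
      \<le> (\<Sum>n<N. 4 * (if \<beta> ^ n \<le> z then \<beta> ^ n else 0))" by (intro sum_mono trm)
  also have "\<dots> = 4 * (\<Sum>n<N. if \<beta> ^ n \<le> z then \<beta> ^ n else 0)" by (simp add: sum_distrib_left)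
  also have "\<dots> \<le> 4 * (z / (1 - \<beta>))" using geo_tail[OF \<beta>0 \<beta>1 z0, of N] by (intro mult_left_mono) auto
  also have "\<dots> = 4 / ((1 - inverse (\<alpha>\<^sup>2)) * (real (Suc j))\<^sup>2)" unfolding z_def \<beta>_def by simp
  finally show ?thesis .
qed

lemma double_sum_bound:
  assumes a: "\<alpha> > 1" and v0: "\<And>j. v j \<ge> 0"
    and B: "\<And>K. (\<Sum>j<K. v j / (real (Suc j))\<^sup>2) \<le> B"
  shows "(\<Sum>n<N. (\<Sum>j<kseq \<alpha> n. v j) / (real (kseq \<alpha> n))\<^sup>2) \<le> 4 / (1 - inverse (\<alpha>\<^sup>2)) * B"
proof -
  define K where "K = kseq \<alpha> N"
  define C where "C = 4 / (1 - inverse (\<alpha>\<^sup>2))"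
  have C0: "C \<ge> 0" unfolding C_def using a by (auto simp: inverse_less_1_iff one_less_power less_imp_le)
  have kK: "kseq \<alpha> n \<le> K" if "n < N" for n using kseq_mono[OF a] that unfolding K_def by (simp add: monoD)
  have "(\<Sum>n<N. (\<Sum>j<kseq \<alpha> n. v j) / (real (kseq \<alpha> n))\<^sup>2)
      = (\<Sum>n<N. \<Sum>j<K. if j < kseq \<alpha> n then v j * (1 / (real (kseq \<alpha> n))\<^sup>2) else 0)"
  proof (rule sum.cong[OF refl])
    fix n assume "n \<in> {..<N}"
    then have "kseq \<alpha> n \<le> K" using kK by simp
    then have "(\<Sum>j<K. if j < kseq \<alpha> n then v j * (1 / (real (kseq \<alpha> n))\<^sup>2) else 0)
        = (\<Sum>j<kseq \<alpha> n. if j < kseq \<alpha> n then v j * (1 / (real (kseq \<alpha> n))\<^sup>2) else 0)"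
      by (intro sum.mono_neutral_right) auto
    also have "\<dots> = (\<Sum>j<kseq \<alpha> n. v j * (1 / (real (kseq \<alpha> n))\<^sup>2))" by simp
    finally have "(\<Sum>j<K. if j < kseq \<alpha> n then v j * (1 / (real (kseq \<alpha> n))\<^sup>2) else 0)
        = (\<Sum>j<kseq \<alpha> n. v j * (1 / (real (kseq \<alpha> n))\<^sup>2))" .
    then show "(\<Sum>j<kseq \<alpha> n. v j) / (real (kseq \<alpha> n))\<^sup>2 = (\<Sum>j<K. if j < kseq \<alpha> n then v j * (1 / (real (kseq \<alpha> n))\<^sup>2) else 0)"
      by (simp add: sum_divide_distrib)
  qed
  also have "\<dots> = (\<Sum>j<K. \<Sum>n<N. if j < kseq \<alpha> n then v j * (1 / (real (kseq \<alpha> n))\<^sup>2) else 0)"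
    by (rule sum.swap)
  also have "\<dots> = (\<Sum>j<K. v j * (\<Sum>n<N. if j < kseq \<alpha> n then 1 / (real (kseq \<alpha> n))\<^sup>2 else 0))"
    by (simp add: sum_distrib_left if_distrib cong: if_cong)
  also have "\<dots> \<le> (\<Sum>j<K. v j * (C / (real (Suc j))\<^sup>2))"
    by (intro sum_mono mult_left_mono v0) (use inner_geo_bound[OF a] in \<open>simp add: C_def\<close>)
  also have "\<dots> = C * (\<Sum>j<K. v j / (real (Suc j))\<^sup>2)" by (simp add: sum_distrib_left ac_simps)
  also have "\<dots> \<le> C * B" using B C0 by (intro mult_left_mono) auto
  finally show ?thesis unfolding C_def .
qed

lemma count_le:
  fixes x :: real assumes "x \<ge> 0"
  shows "(\<Sum>i<N. if real (Suc i) < x then 1 else 0) \<le> x \<and> (\<Sum>i<N. if real (Suc i) < x then 1 else (0::real)) \<le> real N"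
proof (induction N)
  case 0 then show ?case using assms by simp
next
  case (Suc N)
  then show ?case by (cases "real (Suc N) < x") auto
qed

context prob_space
begin

lemma ident_integral:
  fixes g :: "real \<Rightarrow> real"
  assumes "distr M borel (X i) = distr M borel (X 0)"
    and "random_variable borel (X i)" "random_variable borel (X 0)"
    and "g \<in> borel_measurable borel"
  shows "(\<integral>\<omega>. g (X i \<omega>) \<partial>M) = (\<integral>\<omega>. g (X 0 \<omega>) \<partial>M)"
proof -
  have "(\<integral>\<omega>. g (X i \<omega>) \<partial>M) = integral\<^sup>L (distr M borel (X i)) g"
    by (rule integral_distr[symmetric]) (use assms in auto)
  also have "\<dots> = integral\<^sup>L (distr M borel (X 0)) g" using assms(1) by simp
  also have "\<dots> = (\<integral>\<omega>. g (X 0 \<omega>) \<partial>M)"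
    by (rule integral_distr) (use assms in auto)
  finally show ?thesis .
qed

lemma ident_integrable:
  fixes g :: "real \<Rightarrow> real"
  assumes "distr M borel (X i) = distr M borel (X 0)"
    and "random_variable borel (X i)" "random_variable borel (X 0)"
    and "g \<in> borel_measurable borel"
  shows "integrable M (\<lambda>\<omega>. g (X i \<omega>)) \<longleftrightarrow> integrable M (\<lambda>\<omega>. g (X 0 \<omega>))"
proof -
  have "integrable M (\<lambda>\<omega>. g (X i \<omega>)) \<longleftrightarrow> integrable (distr M borel (X i)) g"
    by (rule integrable_distr_eq[symmetric]) (use assms in auto)
  also have "\<dots> \<longleftrightarrow> integrable (distr M borel (X 0)) g" using assms(1) by simp
  also have "\<dots> \<longleftrightarrow> integrable M (\<lambda>\<omega>. g (X 0 \<omega>))"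
    by (rule integrable_distr_eq) (use assms in auto)
  finally show ?thesis .
qed

lemma ident_prob:
  assumes "distr M borel (X i) = distr M borel (X 0)"
    and "random_variable borel (X i)" "random_variable borel (X 0)"
    and "A \<in> sets borel"
  shows "prob {\<omega>\<in>space M. X i \<omega> \<in> A} = prob {\<omega>\<in>space M. X 0 \<omega> \<in> A}"
proof -
  have "prob {\<omega>\<in>space M. X i \<omega> \<in> A} = measure (distr M borel (X i)) A"
    using assms by (subst measure_distr) (auto simp: vimage_def Int_def conj_commute)
  also have "\<dots> = measure (distr M borel (X 0)) A" using assms by simp
  also have "\<dots> = prob {\<omega>\<in>space M. X 0 \<omega> \<in> A}"
    using assms by (subst measure_distr) (auto simp: vimage_def Int_def conj_commute)
  finally show ?thesis .
qed

lemma trunc_ae: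
  fixes X :: "nat \<Rightarrow> 'a \<Rightarrow> real"
  assumes rv: "\<And>i. random_variable borel (X i)"
    and ident: "\<And>i. distr M borel (X i) = distr M borel (X 0)"
    and int: "integrable M (X 0)"
    and nn: "\<And>i \<omega>. \<omega> \<in> space M \<Longrightarrow> X i \<omega> \<ge> 0"
  shows "AE \<omega> in M. eventually (\<lambda>i. X i \<omega> \<le> real (Suc i)) sequentially"
proof -
  define A where "A i = {\<omega>\<in>space M. X i \<omega> \<in> {real (Suc i)<..}}" for i
  have Asets[measurable]: "A i \<in> events" for i unfolding A_def using rv[of i] by measurable
  have pA: "prob (A i) = prob {\<omega>\<in>space M. X 0 \<omega> \<in> {real (Suc i)<..}}" for i
    unfolding A_def by (rule ident_prob[OF ident rv[of i] rv[of 0]]) simp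
  have pA2: "prob (A i) = (\<integral>\<omega>. (if real (Suc i) < X 0 \<omega> then 1 else 0) \<partial>M)" for i
  proof -
    have s: "{\<omega>\<in>space M. X 0 \<omega> \<in> {real (Suc i)<..}} \<in> events" using rv[of 0] by measurable
    have "prob {\<omega>\<in>space M. X 0 \<omega> \<in> {real (Suc i)<..}} = (\<integral>\<omega>. indicator {\<omega>\<in>space M. X 0 \<omega> \<in> {real (Suc i)<..}} \<omega> \<partial>M)"
      using s by (simp add: emeasure_finite)
    also have "\<dots> = (\<integral>\<omega>. (if real (Suc i) < X 0 \<omega> then 1 else 0) \<partial>M)"
      by (intro Bochner_Integration.integral_cong) (auto simp: indicator_def)
    finally show ?thesis using pA by simp
  qed
  have sm: "summable (\<lambda>i. prob (A i))"
  proof (rule summableI_nonneg_bounded)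
    fix N
    have "(\<Sum>i<N. prob (A i)) = (\<integral>\<omega>. (\<Sum>i<N. if real (Suc i) < X 0 \<omega> then 1 else 0) \<partial>M)"
    proof -
      have "integrable M (\<lambda>\<omega>. if real (Suc i) < X 0 \<omega> then 1 else 0::real)" for i
        by (rule integrable_const_bound[where B=1]) (use rv[of 0] in auto)
      then show ?thesis unfolding pA2 by (subst Bochner_Integration.integral_sum) auto
    qed
    also have "\<dots> \<le> (\<integral>\<omega>. X 0 \<omega> \<partial>M)"
    proof (rule integral_mono)
      show "integrable M (\<lambda>\<omega>. \<Sum>i<N. if real (Suc i) < X 0 \<omega> then 1 else 0::real)"
      proof (rule integrable_const_bound[where B="real N"])
        show "AE \<omega> in M. norm (\<Sum>i<N. if real (Suc i) < X 0 \<omega> then 1 else 0::real) \<le> real N"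
        proof (rule AE_I2)
          fix \<omega>
          have "(\<Sum>i<N. if real (Suc i) < X 0 \<omega> then 1 else 0::real) \<le> (\<Sum>i<N. 1)"
            by (intro sum_mono) auto
          then show "norm (\<Sum>i<N. if real (Suc i) < X 0 \<omega> then 1 else 0::real) \<le> real N"
            by (simp add: sum_nonneg)
        qed
      qed (use rv[of 0] in simp)
      show "integrable M (X 0)" by (rule int)
      show "(\<Sum>i<N. if real (Suc i) < X 0 \<omega> then 1 else 0::real) \<le> X 0 \<omega>" if "\<omega> \<in> space M" for \<omega>
        using count_le[OF nn[OF that, of 0]] by blast
    qed
    finally show "(\<Sum>i<N. prob (A i)) \<le> expectation (X 0)" .
  qed simp
  have "AE \<omega> in M. eventually (\<lambda>i. \<omega> \<in> space M - A i) sequentially"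
  proof (rule borel_cantelli_AE1[OF Asets])
    show "emeasure M (A n) < \<infinity>" for n by (simp add: emeasure_finite less_top[symmetric])
    show "summable (\<lambda>n. prob (A n))" by (rule sm)
  qed
  then show ?thesis
  proof (rule AE_mp[OF _ AE_I2[OF impI]])
    fix \<omega> assume "eventually (\<lambda>i. \<omega> \<in> space M - A i) sequentially"
    then show "eventually (\<lambda>i. X i \<omega> \<le> real (Suc i)) sequentially"
      by (rule eventually_mono) (auto simp: A_def)
  qed
qed

end

context prob_space
begin

lemma indep_sum_sq:
  fixes Y :: "nat \<Rightarrow> 'a \<Rightarrow> real"
  assumes indep: "indep_vars (\<lambda>_. borel) Y UNIV"
    and bnd: "\<And>i \<omega>. \<omega> \<in> space M \<Longrightarrow> \<bar>Y i \<omega>\<bar> \<le> B i"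
    and mean0: "\<And>i. expectation (Y i) = 0"
  shows "expectation (\<lambda>\<omega>. (\<Sum>j<k. Y j \<omega>)\<^sup>2) = (\<Sum>j<k. expectation (\<lambda>\<omega>. (Y j \<omega>)\<^sup>2))"
proof -
  have rv[measurable]: "random_variable borel (Y i)" for i using indep unfolding indep_vars_def by auto
  have intprod: "integrable M (\<lambda>\<omega>. Y i \<omega> * Y j \<omega>)" for i j
  proof (rule integrable_const_bound[where B="B i * B j"])
    show "AE \<omega> in M. norm (Y i \<omega> * Y j \<omega>) \<le> B i * B j"
    proof (rule AE_I2)
      fix \<omega> assume w: "\<omega> \<in> space M"
      have "\<bar>Y i \<omega>\<bar> * \<bar>Y j \<omega>\<bar> \<le> B i * B j"
        using bnd[OF w, of i] bnd[OF w, of j] by (intro mult_mono) auto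
      then show "norm (Y i \<omega> * Y j \<omega>) \<le> B i * B j" by (simp add: abs_mult)
    qed
  qed simp
  have intY: "integrable M (Y i)" for i
    by (rule integrable_const_bound[where B="B i"]) (use bnd in auto)
  have off: "expectation (\<lambda>\<omega>. Y i \<omega> * Y j \<omega>) = 0" if "i \<noteq> j" for i j
  proof -
    have ind2: "indep_vars (\<lambda>_. borel) Y {i, j}" by (rule indep_vars_subset[OF indep]) auto
    have "expectation (\<lambda>\<omega>. \<Prod>l\<in>{i,j}. Y l \<omega>) = (\<Prod>l\<in>{i,j}. expectation (Y l))"
      by (rule indep_vars_lebesgue_integral[OF _ ind2 intY]) simp
    then show ?thesis using that mean0 by simp
  qed
  have "expectation (\<lambda>\<omega>. (\<Sum>j<k. Y j \<omega>)\<^sup>2) = expectation (\<lambda>\<omega>. \<Sum>i<k. \<Sum>j<k. Y i \<omega> * Y j \<omega>)"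
    by (simp add: power2_eq_square sum_product)
  also have "\<dots> = (\<Sum>i<k. \<Sum>j<k. expectation (\<lambda>\<omega>. Y i \<omega> * Y j \<omega>))"
    using intprod by (simp add: Bochner_Integration.integral_sum)
  also have "\<dots> = (\<Sum>i<k. \<Sum>j<k. if i = j then expectation (\<lambda>\<omega>. Y i \<omega> * Y j \<omega>) else 0)"
    by (intro sum.cong refl) (auto simp: off)
  also have "\<dots> = (\<Sum>i<k. expectation (\<lambda>\<omega>. (Y i \<omega>)\<^sup>2))"
    by (simp add: power2_eq_square)
  finally show ?thesis .
qed

end

definition trh :: "nat \<Rightarrow> real \<Rightarrow> real" where
  "trh i x = (if 0 \<le> x \<and> x \<le> real (Suc i) then x else 0)"

lemma trh_meas[measurable]: "trh i \<in> borel_measurable borel"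
  unfolding trh_def by measurable

lemma trh_bnd: "\<bar>trh i x\<bar> \<le> real (Suc i)" "\<bar>trh i x\<bar> \<le> \<bar>x\<bar>" "trh i x \<ge> 0"
  unfolding trh_def by auto

lemma trh_le: "trh i x \<le> 1 + real i"
  using trh_bnd(1)[of i x] by simp

lemma trh_abs_le: "\<bar>trh i x\<bar> \<le> 1 + real i"
  using trh_bnd(1)[of i x] by simp

context prob_space
begin

lemma slln_nonneg:
  fixes X :: "nat \<Rightarrow> 'a \<Rightarrow> real"
  assumes indep: "indep_vars (\<lambda>_. borel) X UNIV"
    and ident: "\<And>i. distr M borel (X i) = distr M borel (X 0)"
    and int: "integrable M (X 0)"
    and nn: "\<And>i \<omega>. \<omega> \<in> space M \<Longrightarrow> X i \<omega> \<ge> 0"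
  shows "AE \<omega> in M. (\<lambda>m. (\<Sum>i<m. X i \<omega>) / real m) \<longlonglongrightarrow> expectation (X 0)"
proof -
  have rv[measurable]: "random_variable borel (X i)" for i using indep unfolding indep_vars_def by auto
  define \<mu> where "\<mu> = expectation (X 0)"
  define T where "T i \<omega> = trh i (X i \<omega>)" for i \<omega>
  define m where "m i = expectation (T i)" for i
  define v where "v i = expectation (\<lambda>\<omega>. (T i \<omega>)\<^sup>2)" for i
  have Tmeas[measurable]: "random_variable borel (T i)" for i unfolding T_def by measurable
  have Tint: "integrable M (T i)" for i
    by (rule integrable_const_bound[where B="real (Suc i)"]) (auto simp: T_def trh_abs_le intro!: AE_I2)
  have m_eq: "m i = (\<integral>\<omega>. trh i (X 0 \<omega>) \<partial>M)" for i
    unfolding m_def T_def by (rule ident_integral[OF ident rv[of i] rv[of 0]]) simp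
  have v_eq: "v i = (\<integral>\<omega>. (trh i (X 0 \<omega>))\<^sup>2 \<partial>M)" for i
    unfolding v_def T_def by (rule ident_integral[OF ident rv[of i] rv[of 0], of "\<lambda>x. (trh i x)\<^sup>2"]) simp
  have v0: "v i \<ge> 0" for i unfolding v_def by simp
  have mlim: "m \<longlonglongrightarrow> \<mu>"
    unfolding m_eq \<mu>_def
  proof (rule integral_dominated_convergence[where w="\<lambda>\<omega>. \<bar>X 0 \<omega>\<bar>"])
    show "integrable M (\<lambda>\<omega>. \<bar>X 0 \<omega>\<bar>)" using int by simp
    show "AE \<omega> in M. (\<lambda>i. trh i (X 0 \<omega>)) \<longlonglongrightarrow> X 0 \<omega>"
    proof (rule AE_I2)
      fix \<omega> assume w: "\<omega> \<in> space M"
      obtain N :: nat where N: "X 0 \<omega> \<le> real N" using real_arch_simple by blast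
      have "eventually (\<lambda>i. trh i (X 0 \<omega>) = X 0 \<omega>) sequentially"
        unfolding eventually_sequentially
        by (rule exI[of _ N]) (use N nn[OF w, of 0] in \<open>auto simp: trh_def\<close>)
      then show "(\<lambda>i. trh i (X 0 \<omega>)) \<longlonglongrightarrow> X 0 \<omega>" by (rule tendsto_eventually)
    qed
    show "AE \<omega> in M. norm (trh i (X 0 \<omega>)) \<le> \<bar>X 0 \<omega>\<bar>" for i by (intro AE_I2) (metis real_norm_def trh_bnd(2))
  qed simp_all
  have mces: "(\<lambda>k. (\<Sum>j<k. m j) / real k) \<longlonglongrightarrow> \<mu>" by (rule cesaro[OF mlim])
  have vB: "(\<Sum>j<K. v j / (real (Suc j))\<^sup>2) \<le> 2 * \<mu>" for K
  proof -
    have ii: "integrable M (\<lambda>\<omega>. (trh j (X 0 \<omega>))\<^sup>2 / (real (Suc j))\<^sup>2)" for j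
      by (rule integrable_const_bound[where B="1"])
         (auto simp: trh_def power_divide[symmetric] abs_le_square_iff[symmetric] intro!: AE_I2 power_le_one)
    have "(\<Sum>j<K. v j / (real (Suc j))\<^sup>2) = (\<integral>\<omega>. (\<Sum>j<K. (trh j (X 0 \<omega>))\<^sup>2 / (real (Suc j))\<^sup>2) \<partial>M)"
      unfolding v_eq using ii by (simp add: Bochner_Integration.integral_sum)
    also have "\<dots> \<le> (\<integral>\<omega>. 2 * X 0 \<omega> \<partial>M)"
    proof (rule integral_mono)
      show "integrable M (\<lambda>\<omega>. \<Sum>j<K. (trh j (X 0 \<omega>))\<^sup>2 / (real (Suc j))\<^sup>2)" using ii by simp
      show "integrable M (\<lambda>\<omega>. 2 * X 0 \<omega>)" using int by simp
      fix \<omega> assume w: "\<omega> \<in> space M"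
      have "(\<Sum>j<K. (trh j (X 0 \<omega>))\<^sup>2 / (real (Suc j))\<^sup>2)
          = (\<Sum>j<K. if X 0 \<omega> \<le> real (Suc j) then (X 0 \<omega>)\<^sup>2 / (real (Suc j))\<^sup>2 else 0)"
        using nn[OF w, of 0] by (intro sum.cong) (auto simp: trh_def)
      also have "\<dots> \<le> 2 * X 0 \<omega>" by (rule tail_inv_sq[OF nn[OF w]])
      finally show "(\<Sum>j<K. (trh j (X 0 \<omega>))\<^sup>2 / (real (Suc j))\<^sup>2) \<le> 2 * X 0 \<omega>" .
    qed
    finally show ?thesis unfolding \<mu>_def by simp
  qed
  define D where "D j \<omega> = T j \<omega> - m j" for j \<omega>
  have Dmeas[measurable]: "random_variable borel (D j)" for j unfolding D_def by measurable
  have Dind: "indep_vars (\<lambda>_. borel) D UNIV"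
  proof -
    have "indep_vars (\<lambda>_. borel) (\<lambda>i \<omega>. (\<lambda>x. trh i x - m i) (X i \<omega>)) UNIV"
      by (rule indep_vars_compose2[OF indep]) simp
    then show ?thesis unfolding D_def T_def by simp
  qed
  have varsum: "expectation (\<lambda>\<omega>. (\<Sum>j<k. D j \<omega>)\<^sup>2) \<le> (\<Sum>j<k. v j)" for k
  proof -
    have "expectation (\<lambda>\<omega>. (\<Sum>j<k. D j \<omega>)\<^sup>2) = (\<Sum>j<k. expectation (\<lambda>\<omega>. (D j \<omega>)\<^sup>2))"
    proof (rule indep_sum_sq[OF Dind, where B="\<lambda>j. real (Suc j) + \<bar>m j\<bar>"])
      show "\<bar>D i \<omega>\<bar> \<le> real (Suc i) + \<bar>m i\<bar>" for i \<omega>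
        using trh_bnd(1)[of i "X i \<omega>"] unfolding D_def T_def by linarith
      show "expectation (D i) = 0" for i unfolding D_def m_def using Tint by (simp add: prob_space)
    qed
    also have "\<dots> \<le> (\<Sum>j<k. v j)"
    proof (rule sum_mono)
      fix j
      have "integrable M (\<lambda>\<omega>. (T j \<omega>)\<^sup>2)"
        by (rule integrable_const_bound[where B="(real (Suc j))\<^sup>2"])
           (auto simp: T_def abs_le_square_iff[symmetric] trh_bnd trh_le intro!: AE_I2)
      then have "expectation (\<lambda>\<omega>. (D j \<omega>)\<^sup>2) = v j - (m j)\<^sup>2"
        unfolding D_def v_def m_def using variance_eq[of "T j"] Tint by simp
      then show "expectation (\<lambda>\<omega>. (D j \<omega>)\<^sup>2) \<le> v j" by simp
    qed
    finally show ?thesis .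
  qed
  text \<open>(d) Borel-Cantelli along the geometric subsequences\<close>
  have bc: "AE \<omega> in M. eventually (\<lambda>n. \<bar>\<Sum>j<kseq \<alpha> n. D j \<omega>\<bar> < \<epsilon> * real (kseq \<alpha> n)) sequentially"
    if a: "\<alpha> > 1" and e: "\<epsilon> > 0" for \<alpha> \<epsilon>
  proof -
    define B where "B n = {\<omega>\<in>space M. \<epsilon> * real (kseq \<alpha> n) \<le> \<bar>\<Sum>j<kseq \<alpha> n. D j \<omega>\<bar>}" for n
    have Bsets[measurable]: "B n \<in> events" for n unfolding B_def by measurable
    have pB: "prob (B n) \<le> (\<Sum>j<kseq \<alpha> n. v j) / (\<epsilon>\<^sup>2 * (real (kseq \<alpha> n))\<^sup>2)" for n
    proof -
      have kp: "\<epsilon> * real (kseq \<alpha> n) > 0" using e kseq_props(1)[OF a, of n] by simp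
      have ints: "integrable M (\<lambda>\<omega>. (\<Sum>j<kseq \<alpha> n. D j \<omega>)\<^sup>2)"
      proof (rule integrable_const_bound[where B="(\<Sum>j<kseq \<alpha> n. real (Suc j) + \<bar>m j\<bar>)\<^sup>2"])
        show "AE \<omega> in M. norm ((\<Sum>j<kseq \<alpha> n. D j \<omega>)\<^sup>2) \<le> (\<Sum>j<kseq \<alpha> n. real (Suc j) + \<bar>m j\<bar>)\<^sup>2"
        proof (rule AE_I2)
          fix \<omega>
          have "\<bar>\<Sum>j<kseq \<alpha> n. D j \<omega>\<bar> \<le> (\<Sum>j<kseq \<alpha> n. \<bar>D j \<omega>\<bar>)" by (rule sum_abs)
          also have "\<dots> \<le> (\<Sum>j<kseq \<alpha> n. real (Suc j) + \<bar>m j\<bar>)"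
            by (intro sum_mono) (use trh_bnd(1) in \<open>auto simp: D_def T_def intro: order.trans[OF abs_triangle_ineq4]\<close>)
          finally show "norm ((\<Sum>j<kseq \<alpha> n. D j \<omega>)\<^sup>2) \<le> (\<Sum>j<kseq \<alpha> n. real (Suc j) + \<bar>m j\<bar>)\<^sup>2"
            by (simp add: abs_le_square_iff[symmetric])
        qed
      qed simp
      have "prob (B n) = measure M {\<omega>\<in>space M. \<bar>\<Sum>j<kseq \<alpha> n. D j \<omega>\<bar> \<ge> \<epsilon> * real (kseq \<alpha> n)}"
        unfolding B_def by simp
      also have "\<dots> \<le> expectation (\<lambda>\<omega>. (\<Sum>j<kseq \<alpha> n. D j \<omega>)\<^sup>2) / (\<epsilon> * real (kseq \<alpha> n))\<^sup>2"
        by (rule second_moment_method[OF _ ints kp]) simp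
      also have "\<dots> \<le> (\<Sum>j<kseq \<alpha> n. v j) / (\<epsilon> * real (kseq \<alpha> n))\<^sup>2"
        by (intro divide_right_mono varsum) simp
      finally show ?thesis by (simp add: power_mult_distrib)
    qed
    have sm: "summable (\<lambda>n. prob (B n))"
    proof (rule summableI_nonneg_bounded)
      fix N
      have "(\<Sum>n<N. prob (B n)) \<le> (\<Sum>n<N. (\<Sum>j<kseq \<alpha> n. v j) / (\<epsilon>\<^sup>2 * (real (kseq \<alpha> n))\<^sup>2))"
        by (intro sum_mono pB)
      also have "\<dots> = (1 / \<epsilon>\<^sup>2) * (\<Sum>n<N. (\<Sum>j<kseq \<alpha> n. v j) / (real (kseq \<alpha> n))\<^sup>2)"
        by (subst sum_distrib_left) (intro sum.cong refl, simp add: field_simps)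
      also have "\<dots> \<le> (1 / \<epsilon>\<^sup>2) * (4 / (1 - inverse (\<alpha>\<^sup>2)) * (2 * \<mu>))"
        by (intro mult_left_mono double_sum_bound[OF a v0 vB]) simp
      finally show "(\<Sum>n<N. prob (B n)) \<le> (1 / \<epsilon>\<^sup>2) * (4 / (1 - inverse (\<alpha>\<^sup>2)) * (2 * \<mu>))" .
    qed simp
    have "AE \<omega> in M. eventually (\<lambda>n. \<omega> \<in> space M - B n) sequentially"
    proof (rule borel_cantelli_AE1[OF Bsets])
      show "emeasure M (B n) < \<infinity>" for n by (simp add: emeasure_finite less_top[symmetric])
      show "summable (\<lambda>n. prob (B n))" by (rule sm)
    qed
    then show ?thesis
    proof (rule AE_mp[OF _ AE_I2[OF impI]])
      fix \<omega> assume "eventually (\<lambda>n. \<omega> \<in> space M - B n) sequentially" "\<omega> \<in> space M"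
      then show "eventually (\<lambda>n. \<bar>\<Sum>j<kseq \<alpha> n. D j \<omega>\<bar> < \<epsilon> * real (kseq \<alpha> n)) sequentially"
        by (auto elim!: eventually_mono simp: B_def not_le)
    qed
  qed
  text \<open>(e) countably many subsequences and tolerances at once\<close>
  define al where "al r = 1 + 1 / real (Suc r)" for r
  have al1: "al r > 1" for r unfolding al_def by simp
  have "\<forall>r q. AE \<omega> in M. eventually (\<lambda>n. \<bar>\<Sum>j<kseq (al r) n. D j \<omega>\<bar> < (1 / real (Suc q)) * real (kseq (al r) n)) sequentially"
  proof (intro allI)
    fix r q
    show "AE \<omega> in M. eventually (\<lambda>n. \<bar>\<Sum>j<kseq (al r) n. D j \<omega>\<bar> < (1 / real (Suc q)) * real (kseq (al r) n)) sequentially"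
      by (rule bc[OF al1]) simp
  qed
  then have AE1: "AE \<omega> in M. \<forall>r q. eventually (\<lambda>n. \<bar>\<Sum>j<kseq (al r) n. D j \<omega>\<bar> < (1 / real (Suc q)) * real (kseq (al r) n)) sequentially"
    by (simp add: AE_all_countable)
  have AE2: "AE \<omega> in M. eventually (\<lambda>i. X i \<omega> \<le> real (Suc i)) sequentially"
    by (rule trunc_ae[where X=X]) (use rv ident int nn in auto)
  show ?thesis
    unfolding \<mu>_def[symmetric]
  proof (rule AE_mp[OF AE_conj_iff[THEN iffD2, OF conjI[OF AE1 AE2]] AE_I2[OF impI]])
    fix \<omega> assume w: "\<omega> \<in> space M"
      and H: "(\<forall>r q. eventually (\<lambda>n. \<bar>\<Sum>j<kseq (al r) n. D j \<omega>\<bar> < (1 / real (Suc q)) * real (kseq (al r) n)) sequentially)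
          \<and> eventually (\<lambda>i. X i \<omega> \<le> real (Suc i)) sequentially"
    define S where "S k = (\<Sum>j<k. T j \<omega>)" for k
    have T0: "T j \<omega> \<ge> 0" for j unfolding T_def by (simp add: trh_bnd)
    have Smono: "mono S" unfolding S_def
      by (rule monoI, rule sum_mono2) (auto simp: T0)
    have S0: "S k \<ge> 0" for k unfolding S_def by (simp add: sum_nonneg T0)
    have Ssub: "(\<lambda>n. S (kseq (1 + 1 / real (Suc r)) n) / real (kseq (1 + 1 / real (Suc r)) n)) \<longlonglongrightarrow> \<mu>" for r
    proof -
      have Dlim: "(\<lambda>n. (\<Sum>j<kseq (al r) n. D j \<omega>) / real (kseq (al r) n)) \<longlonglongrightarrow> 0"
      proof (rule LIMSEQ_I)
        fix e :: real assume e: "e > 0"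
        obtain q :: nat where q: "1 / real (Suc q) < e"
          using e by (metis nat_approx_posE)
        from H have ev: "eventually (\<lambda>n. \<bar>\<Sum>j<kseq (al r) n. D j \<omega>\<bar> < (1 / real (Suc q)) * real (kseq (al r) n)) sequentially"
          by blast
        then obtain N where N: "\<And>n. n \<ge> N \<Longrightarrow> \<bar>\<Sum>j<kseq (al r) n. D j \<omega>\<bar> < (1 / real (Suc q)) * real (kseq (al r) n)"
          by (auto simp: eventually_sequentially)
        show "\<exists>no. \<forall>n\<ge>no. norm ((\<Sum>j<kseq (al r) n. D j \<omega>) / real (kseq (al r) n) - 0) < e"
        proof (intro exI allI impI)
          fix n assume "n \<ge> N"
          note Nn = N[OF this]
          have kp: "real (kseq (al r) n) > 0" using kseq_props(1)[OF al1, of r n] by simp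
          have "\<bar>\<Sum>j<kseq (al r) n. D j \<omega>\<bar> / real (kseq (al r) n) < 1 / real (Suc q)"
            using Nn kp by (simp add: divide_less_eq)
          then show "norm ((\<Sum>j<kseq (al r) n. D j \<omega>) / real (kseq (al r) n) - 0) < e"
            using q by simp
        qed
      qed
      have Mlim: "(\<lambda>n. (\<Sum>j<kseq (al r) n. m j) / real (kseq (al r) n)) \<longlonglongrightarrow> \<mu>"
        using filterlim_compose[OF mces kseq_at_top[OF al1]] by (simp add: o_def)
      have "(\<lambda>n. (\<Sum>j<kseq (al r) n. D j \<omega>) / real (kseq (al r) n) + (\<Sum>j<kseq (al r) n. m j) / real (kseq (al r) n)) \<longlonglongrightarrow> 0 + \<mu>"
        by (rule tendsto_add[OF Dlim Mlim])
      moreover have "(\<Sum>j<k. D j \<omega>) / real k + (\<Sum>j<k. m j) / real k = S k / real k" for k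
        unfolding S_def D_def by (simp add: sum_subtractf add_divide_distrib[symmetric])
      ultimately show ?thesis unfolding al_def by simp
    qed
    have Tlim: "(\<lambda>k. S k / real k) \<longlonglongrightarrow> \<mu>" by (rule sandwich[OF Smono S0 Ssub])
    from H obtain N where N: "\<And>i. i \<ge> N \<Longrightarrow> X i \<omega> \<le> real (Suc i)"
      by (auto simp: eventually_sequentially)
    have XT: "X i \<omega> = T i \<omega>" if "i \<ge> N" for i
      using N[OF that] nn[OF w, of i] unfolding T_def trh_def by simp
    define C where "C = (\<Sum>j<N. X j \<omega> - T j \<omega>)"
    have split: "(\<Sum>j<k. X j \<omega>) = S k + C" if "k \<ge> N" for k
    proof -
      have "(\<Sum>j<k. X j \<omega> - T j \<omega>) = C"
        unfolding C_def using that XT by (intro sum.mono_neutral_right) auto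
      then show ?thesis unfolding S_def by (simp add: sum_subtractf)
    qed
    have "(\<lambda>k. S k / real k + C / real k) \<longlonglongrightarrow> \<mu> + 0"
      by (intro tendsto_add Tlim lim_const_over_n)
    then have lim2: "(\<lambda>k. S k / real k + C / real k) \<longlonglongrightarrow> \<mu>" by simp
    show "(\<lambda>k. (\<Sum>i<k. X i \<omega>) / real k) \<longlonglongrightarrow> \<mu>"
    proof (rule Lim_transform_eventually[OF lim2])
      show "eventually (\<lambda>k. S k / real k + C / real k = (\<Sum>i<k. X i \<omega>) / real k) sequentially"
        unfolding eventually_sequentially
        by (rule exI[of _ N]) (simp add: split add_divide_distrib)
    qed
  qed
qed

end

context prob_space
begin

lemma ident_compose:
  assumes "distr M N (X i) = distr M N (X j)"
    and "X i \<in> measurable M N" "X j \<in> measurable M N"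
    and "f \<in> measurable N L"
  shows "distr M L (\<lambda>\<omega>. f (X i \<omega>)) = distr M L (\<lambda>\<omega>. f (X j \<omega>))"
proof -
  have "distr M L (\<lambda>\<omega>. f (X i \<omega>)) = distr (distr M N (X i)) L f"
    using distr_distr[of f N L "X i" M] assms by (simp add: comp_def)
  also have "\<dots> = distr (distr M N (X j)) L f" using assms(1) by simp
  also have "\<dots> = distr M L (\<lambda>\<omega>. f (X j \<omega>))"
    using distr_distr[of f N L "X j" M] assms by (simp add: comp_def)
  finally show ?thesis .
qed

lemma slln:
  fixes X :: "nat \<Rightarrow> 'a \<Rightarrow> real"
  assumes indep: "indep_vars (\<lambda>_. borel) X UNIV"
    and ident: "\<And>i. distr M borel (X i) = distr M borel (X 0)"
    and int: "integrable M (X 0)"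
  shows "AE \<omega> in M. (\<lambda>m. (\<Sum>i<m. X i \<omega>) / real m) \<longlonglongrightarrow> expectation (X 0)"
proof -
  have rv[measurable]: "random_variable borel (X i)" for i using indep unfolding indep_vars_def by auto
  define P where "P i \<omega> = max (X i \<omega>) 0" for i \<omega>
  define Q where "Q i \<omega> = max (- X i \<omega>) 0" for i \<omega>
  have indP: "indep_vars (\<lambda>_. borel) P UNIV"
    unfolding P_def by (rule indep_vars_compose2[OF indep, where Y="\<lambda>_ x. max x 0"]) simp
  have indQ: "indep_vars (\<lambda>_. borel) Q UNIV"
    unfolding Q_def by (rule indep_vars_compose2[OF indep, where Y="\<lambda>_ x. max (- x) 0"]) simp
  have idP: "distr M borel (P i) = distr M borel (P 0)" for i
    unfolding P_def by (rule ident_compose[OF ident[of i] rv[of i] rv[of 0]]) simp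
  have idQ: "distr M borel (Q i) = distr M borel (Q 0)" for i
    unfolding Q_def by (rule ident_compose[OF ident[of i] rv[of i] rv[of 0]]) simp
  have intP: "integrable M (P 0)" unfolding P_def using int by (intro integrable_max) auto
  have intQ: "integrable M (Q 0)" unfolding Q_def using int by (intro integrable_max) auto
  have aP: "AE \<omega> in M. (\<lambda>m. (\<Sum>i<m. P i \<omega>) / real m) \<longlonglongrightarrow> expectation (P 0)"
    by (rule slln_nonneg[OF indP idP intP]) (simp add: P_def)
  have aQ: "AE \<omega> in M. (\<lambda>m. (\<Sum>i<m. Q i \<omega>) / real m) \<longlonglongrightarrow> expectation (Q 0)"
    by (rule slln_nonneg[OF indQ idQ intQ]) (simp add: Q_def)
  have PQ: "X i \<omega> = P i \<omega> - Q i \<omega>" for i \<omega> unfolding P_def Q_def by simp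
  have EX: "expectation (X 0) = expectation (P 0) - expectation (Q 0)"
  proof -
    have "expectation (X 0) = expectation (\<lambda>\<omega>. P 0 \<omega> - Q 0 \<omega>)" by (simp add: PQ[symmetric])
    also have "\<dots> = expectation (P 0) - expectation (Q 0)" using intP intQ by simp
    finally show ?thesis .
  qed
  show ?thesis
  proof (rule AE_mp[OF AE_conj_iff[THEN iffD2, OF conjI[OF aP aQ]] AE_I2[OF impI]])
    fix \<omega> assume "(\<lambda>m. (\<Sum>i<m. P i \<omega>) / real m) \<longlonglongrightarrow> expectation (P 0) \<and>
                  (\<lambda>m. (\<Sum>i<m. Q i \<omega>) / real m) \<longlonglongrightarrow> expectation (Q 0)"
    then have "(\<lambda>m. (\<Sum>i<m. P i \<omega>) / real m - (\<Sum>i<m. Q i \<omega>) / real m) \<longlonglongrightarrow> expectation (P 0) - expectation (Q 0)"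
      by (intro tendsto_diff) auto
    moreover have "(\<Sum>i<m. P i \<omega>) / real m - (\<Sum>i<m. Q i \<omega>) / real m = (\<Sum>i<m. X i \<omega>) / real m" for m
      by (simp add: PQ sum_subtractf diff_divide_distrib)
    ultimately show "(\<lambda>m. (\<Sum>i<m. X i \<omega>) / real m) \<longlonglongrightarrow> expectation (X 0)" by (simp add: EX)
  qed
qed

lemma indep_sets_reindex:
  assumes ind: "indep_sets F (f ` I)" and inj: "inj_on f I"
  shows "indep_sets (\<lambda>i. F (f i)) I"
  unfolding indep_sets_def
proof (intro conjI ballI allI impI)
  fix i assume "i \<in> I" then show "F (f i) \<subseteq> events" using ind unfolding indep_sets_def by auto
next
  fix J A assume J: "J \<subseteq> I" "J \<noteq> {}" "finite J" and A: "A \<in> Pi J (\<lambda>i. F (f i))"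
  have injJ: "inj_on f J" using inj J(1) by (rule inj_on_subset)
  define A' where "A' y = A (the_inv_into J f y)" for y
  have A'f: "A' (f j) = A j" if "j \<in> J" for j unfolding A'_def using the_inv_into_f_f[OF injJ that] by simp
  have "A' \<in> Pi (f ` J) F" using A A'f by auto
  then have "prob (\<Inter>y\<in>f ` J. A' y) = (\<Prod>y\<in>f ` J. prob (A' y))"
    using ind J unfolding indep_sets_def by (metis finite_imageI image_is_empty image_mono)
  moreover have "(\<Inter>y\<in>f ` J. A' y) = (\<Inter>j\<in>J. A j)" using A'f by auto
  moreover have "(\<Prod>y\<in>f ` J. prob (A' y)) = (\<Prod>j\<in>J. prob (A j))"
    using A'f by (simp add: prod.reindex[OF injJ])
  ultimately show "prob (\<Inter>j\<in>J. A j) = (\<Prod>j\<in>J. prob (A j))" by simp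
qed

lemma indep_vars_reindex:
  assumes ind: "indep_vars M' X (f ` I)" and inj: "inj_on f I"
  shows "indep_vars (\<lambda>i. M' (f i)) (\<lambda>i. X (f i)) I"
proof -
  from ind have rv: "\<forall>i\<in>f ` I. random_variable (M' i) (X i)"
    and isets: "indep_sets (\<lambda>i. {X i -` A \<inter> space M |A. A \<in> sets (M' i)}) (f ` I)"
    unfolding indep_vars_def2 by auto
  show ?thesis unfolding indep_vars_def2
    using rv indep_sets_reindex[OF isets inj] by auto
qed

end

lemma unif_sym:
  "distr (uniform_measure lborel {-pi..pi}) borel uminus = uniform_measure lborel {-pi..pi::real}"
  (is "distr ?U borel uminus = ?U")
proof (rule measure_eqI)
  show "sets (distr ?U borel uminus) = sets ?U" by simp
  fix A assume "A \<in> sets (distr ?U borel uminus)"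
  then have A: "A \<in> sets borel" by simp
  have um: "uminus \<in> ?U \<rightarrow>\<^sub>M (borel :: real measure)"
    by (subst measurable_cong_sets[where M'=borel and N'=borel]) auto
  have pre: "uminus -` A \<in> sets borel" using measurable_sets[OF um A] by simp
  have AS: "{-pi..pi} \<inter> uminus -` A = uminus -` ({-pi..pi} \<inter> A)" by auto
  have inv: "emeasure lborel (uminus -` B) = emeasure lborel B" if "B \<in> sets borel" for B :: "real set"
  proof -
    have "emeasure lborel B = emeasure (distr lborel borel uminus) B" by (simp add: lborel_distr_uminus)
    also have "\<dots> = emeasure lborel (uminus -` B \<inter> space lborel)"
      by (rule emeasure_distr) (use that in auto)
    finally show ?thesis by simp
  qed
  have "emeasure (distr ?U borel uminus) A = emeasure ?U (uminus -` A \<inter> space ?U)"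
    by (rule emeasure_distr[OF um A])
  also have "\<dots> = emeasure ?U (uminus -` A)" by simp
  also have "\<dots> = emeasure lborel ({-pi..pi} \<inter> uminus -` A) / emeasure lborel {-pi..pi}"
    using A pre by (subst emeasure_uniform_measure) auto
  also have "\<dots> = emeasure lborel ({-pi..pi} \<inter> A) / emeasure lborel {-pi..pi}"
    unfolding AS using A by (subst inv) auto
  also have "\<dots> = emeasure ?U A"
    using A by (subst emeasure_uniform_measure) auto
  finally show "emeasure (distr ?U borel uminus) A = emeasure ?U A" .
qed

context prob_space
begin

lemma slln_shift:
  fixes Tr :: "nat \<Rightarrow> 'a \<Rightarrow> 'b" and f :: "'b \<Rightarrow> real"
  assumes ind: "indep_vars (\<lambda>_. N) Tr {1..}"
    and idd: "\<And>i. i \<ge> 1 \<Longrightarrow> distr M N (Tr i) = distr M N (Tr 1)"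
    and f: "f \<in> N \<rightarrow>\<^sub>M borel"
    and int: "integrable M (\<lambda>\<omega>. f (Tr 1 \<omega>))"
  shows "AE \<omega> in M. (\<lambda>m. (\<Sum>i<m. f (Tr (Suc i) \<omega>)) / real m) \<longlonglongrightarrow> expectation (\<lambda>\<omega>. f (Tr 1 \<omega>))"
proof -
  have rv: "Tr i \<in> M \<rightarrow>\<^sub>M N" if "i \<ge> 1" for i using ind that unfolding indep_vars_def by auto
  have ind2: "indep_vars (\<lambda>_. borel) (\<lambda>i \<omega>. f (Tr i \<omega>)) (Suc ` UNIV)"
  proof -
    have "Suc ` UNIV = {1..}" by (auto simp: image_iff) (metis Suc_pred' less_eq_Suc_le not_less_eq_eq not_one_le_zero)
    then show ?thesis using indep_vars_compose2[OF ind, where Y="\<lambda>_. f" and N="\<lambda>_. borel"] f by simp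
  qed
  have ind3: "indep_vars (\<lambda>_. borel) (\<lambda>i \<omega>. f (Tr (Suc i) \<omega>)) UNIV"
    using indep_vars_reindex[OF ind2] by simp
  have id3: "distr M borel (\<lambda>\<omega>. f (Tr (Suc i) \<omega>)) = distr M borel (\<lambda>\<omega>. f (Tr (Suc 0) \<omega>))" for i
    using ident_compose[where X=Tr and i="Suc i" and j=1 and N=N and L=borel and f=f] idd[of "Suc i"] rv[of "Suc i"] rv[of 1] f
    by simp
  have "AE \<omega> in M. (\<lambda>m. (\<Sum>i<m. f (Tr (Suc i) \<omega>)) / real m) \<longlonglongrightarrow> expectation (\<lambda>\<omega>. f (Tr (Suc 0) \<omega>))"
    by (rule slln[OF ind3 id3]) (use int in simp)
  then show ?thesis by simp
qed

end

theorem lemma1: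
  fixes M :: "'a measure"
    and G w0 \<theta> :: real
    and F \<phi> :: "nat \<Rightarrow> 'a \<Rightarrow> real"
    and n :: "nat \<Rightarrow> 'a \<Rightarrow> real \<Rightarrow> real"
  assumes "prob_space M"
    and "G > 0" and "w0 > 0"
    and F_meas: "\<And>i. i \<ge> 1 \<Longrightarrow> F i \<in> borel_measurable M"
    and phi_meas: "\<And>i. i \<ge> 1 \<Longrightarrow> \<phi> i \<in> borel_measurable M"
    and n_meas: "\<And>i. i \<ge> 1 \<Longrightarrow> n i \<in> measurable M path_space"
    and iid_indep: "prob_space.indep_vars M (\<lambda>_. triple_space)
                      (\<lambda>i \<omega>. (F i \<omega>, \<phi> i \<omega>, n i \<omega>)) {1..}"
    and iid_dist: "\<And>i. i \<ge> 1 \<Longrightarrow>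
                      distr M triple_space (\<lambda>\<omega>. (F i \<omega>, \<phi> i \<omega>, n i \<omega>))
                    = distr M triple_space (\<lambda>\<omega>. (F 1 \<omega>, \<phi> 1 \<omega>, n 1 \<omega>))"
    and indep_within: "\<And>i. i \<ge> 1 \<Longrightarrow>
                      prob_space.indep_sets M
                        (\<lambda>j::nat. if j = 0 then rv_events M borel (F i)
                                 else if j = 1 then rv_events M borel (\<phi> i)
                                 else rv_events M path_space (n i)) {0, 1, 2}"
    and F_int: "\<And>i. i \<ge> 1 \<Longrightarrow> integrable M (F i)"
    and phi_unif: "\<And>i. i \<ge> 1 \<Longrightarrow> distr M borel (\<phi> i) = uniform_measure lborel {-pi..pi}"
    and n_int: "\<And>i t. i \<ge> 1 \<Longrightarrow> integrable M (\<lambda>\<omega>. n i \<omega> t)"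
    and n_mean: "\<And>i t. i \<ge> 1 \<Longrightarrow> (\<integral>\<omega>. n i \<omega> t \<partial>M) = 0"
  shows "\<exists>c::real. \<forall>t::real.
           AE \<omega> in M. (\<lambda>m. g_hat G w0 \<theta> F \<phi> n m t \<omega>) \<longlonglongrightarrow> c * sig_in G w0 \<theta> t
             \<and> filterlim (\<lambda>m. card (Xplus \<phi> m \<omega>)) at_top sequentially"
proof -
  interpret P: prob_space M by fact
  define Tr where "Tr i \<omega> = (F i \<omega>, \<phi> i \<omega>, n i \<omega>)" for i \<omega>
  have Trm: "Tr i \<in> M \<rightarrow>\<^sub>M triple_space" if "i \<ge> 1" for i
    unfolding Tr_def using F_meas[OF that] phi_meas[OF that] n_meas[OF that]
    by (intro measurable_Pair) auto
  have ind: "P.indep_vars (\<lambda>_. triple_space) Tr {1..}" using iid_indep unfolding Tr_def .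
  have idd: "distr M triple_space (Tr i) = distr M triple_space (Tr 1)" if "i \<ge> 1" for i
    using iid_dist[OF that] unfolding Tr_def .
  define Ifun :: "real \<Rightarrow> real" where "Ifun y = (if \<bar>y\<bar> \<le> pi / 2 then 1 else 0)" for y
  have Ifun_meas[measurable]: "Ifun \<in> borel_measurable borel" unfolding Ifun_def by measurable
  have Ifun_bnd: "\<bar>Ifun y\<bar> \<le> 1" for y unfolding Ifun_def by auto
  define fI :: "real \<times> real \<times> (real \<Rightarrow> real) \<Rightarrow> real" where "fI p = Ifun (fst (snd p))" for p
  define fZ :: "real \<Rightarrow> real \<times> real \<times> (real \<Rightarrow> real) \<Rightarrow> real" where
    "fZ t p = (if \<bar>fst (snd p)\<bar> \<le> pi / 2 then G * fst p * sin (w0 * t + fst (snd p) + \<theta>) + snd (snd p) t else 0)" for t p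
  have fI_meas: "fI \<in> triple_space \<rightarrow>\<^sub>M borel" unfolding fI_def by measurable
  have fZ_meas: "fZ t \<in> triple_space \<rightarrow>\<^sub>M borel" for t unfolding fZ_def by measurable
  have nt_meas[measurable]: "(\<lambda>\<omega>. n 1 \<omega> t) \<in> borel_measurable M" for t
    using measurable_compose[OF n_meas[of 1] measurable_component_singleton[of t UNIV "\<lambda>_. borel"]] by simp
  have F1m[measurable]: "F 1 \<in> borel_measurable M" using F_meas by simp
  have phi1m[measurable]: "\<phi> 1 \<in> borel_measurable M" using phi_meas by simp
  have phi1m'[measurable]: "\<phi> (Suc 0) \<in> borel_measurable M" using phi_meas by simp
  have F1m'[measurable]: "F (Suc 0) \<in> borel_measurable M" using F_meas by simp
  have nt_meas'[measurable]: "(\<lambda>\<omega>. n (Suc 0) \<omega> t) \<in> borel_measurable M" for t using nt_meas by simp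
  have sub2: "{(\<lambda>\<omega>. n 1 \<omega> t) -` A \<inter> space M |A. A \<in> sets borel} \<subseteq> rv_events M path_space (n 1)" for t
  proof
    fix S assume "S \<in> {(\<lambda>\<omega>. n 1 \<omega> t) -` A \<inter> space M |A. A \<in> sets borel}"
    then obtain A where A: "A \<in> sets borel" "S = (\<lambda>\<omega>. n 1 \<omega> t) -` A \<inter> space M" by auto
    define B where "B = (\<lambda>f. f t) -` A \<inter> space path_space"
    have "B \<in> sets path_space"
      unfolding B_def using measurable_sets[OF measurable_component_singleton[of t UNIV "\<lambda>_. borel"] A(1)] by simp
    moreover have "S = n 1 -` B \<inter> space M" using A unfolding B_def by (auto simp: space_PiM)
    ultimately show "S \<in> rv_events M path_space (n 1)" unfolding rv_events_def by blast
  qed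
  define W where "W t j = (if j = 0 then F 1 else if j = (1::nat) then \<phi> 1 else (\<lambda>\<omega>. n 1 \<omega> t))" for t j
  have Wind: "P.indep_vars (\<lambda>_. borel) (W t) {0,1,2}" for t
  proof -
    have "P.indep_sets (\<lambda>j. {W t j -` A \<inter> space M |A. A \<in> sets borel}) {0,1,2}"
    proof (rule P.indep_sets_mono_sets[OF indep_within[of 1]])
      fix j :: nat assume "j \<in> {0,1,2}"
      then show "{W t j -` A \<inter> space M |A. A \<in> sets borel}
          \<subseteq> (if j = 0 then rv_events M borel (F 1) else if j = 1 then rv_events M borel (\<phi> 1) else rv_events M path_space (n 1))"
        using sub2[of t] by (auto simp: W_def rv_events_def)
    qed simp
    moreover have "\<forall>j\<in>{0,1,2}. W t j \<in> M \<rightarrow>\<^sub>M borel" using F1m phi1m nt_meas[of t] by (auto simp: W_def)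
    ultimately show ?thesis unfolding P.indep_vars_def2 by simp
  qed
  have Fint: "integrable M (F 1)" using F_int by simp
  have bint: "integrable M (\<lambda>\<omega>. g (\<phi> 1 \<omega>))" if "g \<in> borel_measurable borel" "\<And>y. \<bar>g y\<bar> \<le> 1" for g :: "real \<Rightarrow> real"
    by (rule finite_measure.integrable_const_bound[where B=1]) (use that P.finite_measure_axioms measurable_compose[OF phi1m that(1)] in auto)
  have E1: "(\<integral>\<omega>. F 1 \<omega> * g (\<phi> 1 \<omega>) \<partial>M) = (\<integral>\<omega>. F 1 \<omega> \<partial>M) * (\<integral>\<omega>. g (\<phi> 1 \<omega>) \<partial>M)"
    if g: "g \<in> borel_measurable borel" "\<And>y. \<bar>g y\<bar> \<le> 1" for g :: "real \<Rightarrow> real"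
  proof -
    define Y where "Y j x = (if j = (0::nat) then x else g x)" for j x
    have i01: "P.indep_vars (\<lambda>_. borel) (W 0) {0,1}" by (rule P.indep_vars_subset[OF Wind]) auto
    have i01': "P.indep_vars (\<lambda>_. borel) (\<lambda>j \<omega>. Y j (W 0 j \<omega>)) {0,1}"
      by (rule P.indep_vars_compose2[OF i01]) (use g in \<open>auto simp: Y_def\<close>)
    have "(\<integral>\<omega>. (\<Prod>j\<in>{0,1}. Y j (W 0 j \<omega>)) \<partial>M) = (\<Prod>j\<in>{0,1}. \<integral>\<omega>. Y j (W 0 j \<omega>) \<partial>M)"
      by (rule P.indep_vars_lebesgue_integral[OF _ i01']) (use Fint bint[OF g] in \<open>auto simp: Y_def W_def\<close>)
    then show ?thesis by (simp add: Y_def W_def)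
  qed
  have E2: "(\<integral>\<omega>. g (\<phi> 1 \<omega>) * n 1 \<omega> t \<partial>M) = 0"
    if g: "g \<in> borel_measurable borel" "\<And>y. \<bar>g y\<bar> \<le> 1" for g :: "real \<Rightarrow> real" and t
  proof -
    define Y where "Y j x = (if j = (1::nat) then g x else x)" for j x
    have i12: "P.indep_vars (\<lambda>_. borel) (W t) {1,2}" by (rule P.indep_vars_subset[OF Wind]) auto
    have i12': "P.indep_vars (\<lambda>_. borel) (\<lambda>j \<omega>. Y j (W t j \<omega>)) {1,2}"
      by (rule P.indep_vars_compose2[OF i12]) (use g in \<open>auto simp: Y_def\<close>)
    have "(\<integral>\<omega>. (\<Prod>j\<in>{1,2}. Y j (W t j \<omega>)) \<partial>M) = (\<Prod>j\<in>{1,2}. \<integral>\<omega>. Y j (W t j \<omega>) \<partial>M)"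
      by (rule P.indep_vars_lebesgue_integral[OF _ i12']) (use n_int[of 1 t] bint[OF g] in \<open>auto simp: Y_def W_def\<close>)
    then show ?thesis using n_mean[of 1 t] by (simp add: Y_def W_def)
  qed
  define U where "U = uniform_measure lborel {-pi..pi::real}"
  have U: "distr M borel (\<phi> 1) = U" using phi_unif[of 1] unfolding U_def by simp
  have um: "(uminus :: real \<Rightarrow> real) \<in> borel \<rightarrow>\<^sub>M borel" by simp
  have symd: "distr M borel (\<lambda>\<omega>. - \<phi> 1 \<omega>) = distr M borel (\<phi> 1)"
  proof -
    have "distr M borel (\<lambda>\<omega>. - \<phi> 1 \<omega>) = distr (distr M borel (\<phi> 1)) borel uminus"
      using distr_distr[OF um phi1m] by (simp add: comp_def)
    also have "\<dots> = U" unfolding U U_def by (rule unif_sym)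
    finally show ?thesis using U by simp
  qed
  have odd0: "(\<integral>\<omega>. Ifun (\<phi> 1 \<omega>) * sin (\<phi> 1 \<omega>) \<partial>M) = 0"
  proof -
    define h where "h y = Ifun y * sin y" for y
    have hm: "h \<in> borel_measurable borel" unfolding h_def by measurable
    have hodd: "h (- y) = - h y" for y unfolding h_def Ifun_def by simp
    have "(\<integral>\<omega>. h (\<phi> 1 \<omega>) \<partial>M) = integral\<^sup>L (distr M borel (\<phi> 1)) h"
      by (rule integral_distr[symmetric]) (use hm in auto)
    also have "\<dots> = integral\<^sup>L (distr M borel (\<lambda>\<omega>. - \<phi> 1 \<omega>)) h" by (simp only: symd)
    also have "\<dots> = (\<integral>\<omega>. h (- \<phi> 1 \<omega>) \<partial>M)"
      by (rule integral_distr) (use hm in auto)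
    also have "\<dots> = - (\<integral>\<omega>. h (\<phi> 1 \<omega>) \<partial>M)" by (simp add: hodd)
    finally show ?thesis unfolding h_def by simp
  qed
  have pI: "(\<integral>\<omega>. Ifun (\<phi> 1 \<omega>) \<partial>M) = 1 / 2"
  proof -
    have Ifi: "Ifun = indicator {-pi/2..pi/2}" unfolding Ifun_def by (rule ext) (auto simp: indicator_def abs_le_iff)
    interpret U: prob_space U unfolding U_def by (rule prob_space_uniform_measure) auto
    have "(\<integral>\<omega>. Ifun (\<phi> 1 \<omega>) \<partial>M) = integral\<^sup>L U Ifun"
      unfolding U[symmetric] by (rule integral_distr[symmetric]) auto
    also have "\<dots> = measure U {-pi/2..pi/2}"
      unfolding Ifi by (simp add: U_def)
    also have "\<dots> = measure lborel ({-pi..pi} \<inter> {-pi/2..pi/2}) / measure lborel {-pi..pi}"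
      unfolding U_def by (rule measure_uniform_measure) auto
    also have "{-pi..pi} \<inter> {-pi/2..pi/2} = {-pi/2..pi/2::real}" by auto
    also have "measure lborel {-pi/2..pi/2::real} / measure lborel {-pi..pi::real} = 1 / 2"
      by (simp add: measure_lborel_Icc)
    finally show ?thesis .
  qed
  define EF where "EF = (\<integral>\<omega>. F 1 \<omega> \<partial>M)"
  define \<kappa>0 where "\<kappa>0 = (\<integral>\<omega>. Ifun (\<phi> 1 \<omega>) * cos (\<phi> 1 \<omega>) \<partial>M)"
  have intZ: "integrable M (\<lambda>\<omega>. fZ t (Tr 1 \<omega>))"
    and EZ: "(\<integral>\<omega>. fZ t (Tr 1 \<omega>) \<partial>M) = EF * \<kappa>0 * (G * sin (w0 * t + \<theta>))" for t
  proof -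
    define a where "a = w0 * t + \<theta>"
    define s where "s y = Ifun y * sin (a + y)" for y
    have sm: "s \<in> borel_measurable borel" unfolding s_def by measurable
    have sb: "\<bar>s y\<bar> \<le> 1" for y unfolding s_def Ifun_def by (auto simp: abs_sin_le_one)
    have fZ_eq: "fZ t (Tr 1 \<omega>) = G * (F 1 \<omega> * s (\<phi> 1 \<omega>)) + Ifun (\<phi> 1 \<omega>) * n 1 \<omega> t" for \<omega>
      unfolding fZ_def Tr_def Ifun_def a_def s_def by (simp add: ac_simps)
    have int1: "integrable M (\<lambda>\<omega>. F 1 \<omega> * s (\<phi> 1 \<omega>))"
    proof (rule Bochner_Integration.integrable_bound[OF Fint])
      show "(\<lambda>\<omega>. F 1 \<omega> * s (\<phi> 1 \<omega>)) \<in> borel_measurable M" using sm by measurable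
      show "AE \<omega> in M. norm (F 1 \<omega> * s (\<phi> 1 \<omega>)) \<le> norm (F 1 \<omega>)"
        using sb by (intro AE_I2) (simp add: abs_mult mult_left_le)
    qed
    have int2: "integrable M (\<lambda>\<omega>. Ifun (\<phi> 1 \<omega>) * n 1 \<omega> t)"
    proof (rule Bochner_Integration.integrable_bound[OF n_int[of 1 t]])
      show "(\<lambda>\<omega>. Ifun (\<phi> 1 \<omega>) * n 1 \<omega> t) \<in> borel_measurable M" by measurable
      show "AE \<omega> in M. norm (Ifun (\<phi> 1 \<omega>) * n 1 \<omega> t) \<le> norm (n 1 \<omega> t)"
        by (intro AE_I2) (simp add: Ifun_def)
    qed simp
    show "integrable M (\<lambda>\<omega>. fZ t (Tr 1 \<omega>))" unfolding fZ_eq using int1 int2 by simp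
    have "(\<integral>\<omega>. fZ t (Tr 1 \<omega>) \<partial>M) = G * (\<integral>\<omega>. F 1 \<omega> * s (\<phi> 1 \<omega>) \<partial>M) + (\<integral>\<omega>. Ifun (\<phi> 1 \<omega>) * n 1 \<omega> t \<partial>M)"
      unfolding fZ_eq using int1 int2 by simp
    also have "(\<integral>\<omega>. Ifun (\<phi> 1 \<omega>) * n 1 \<omega> t \<partial>M) = 0" by (rule E2) (auto simp: Ifun_def)
    also have "(\<integral>\<omega>. F 1 \<omega> * s (\<phi> 1 \<omega>) \<partial>M) = EF * (\<integral>\<omega>. s (\<phi> 1 \<omega>) \<partial>M)"
      unfolding EF_def by (rule E1[OF sm sb])
    also have "(\<integral>\<omega>. s (\<phi> 1 \<omega>) \<partial>M) = (\<integral>\<omega>. sin a * (Ifun (\<phi> 1 \<omega>) * cos (\<phi> 1 \<omega>)) + cos a * (Ifun (\<phi> 1 \<omega>) * sin (\<phi> 1 \<omega>)) \<partial>M)"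
      unfolding s_def by (simp add: sin_add algebra_simps)
    also have "\<dots> = sin a * \<kappa>0 + cos a * (\<integral>\<omega>. Ifun (\<phi> 1 \<omega>) * sin (\<phi> 1 \<omega>) \<partial>M)"
    proof -
      have i1: "integrable M (\<lambda>\<omega>. Ifun (\<phi> 1 \<omega>) * cos (\<phi> 1 \<omega>))"
        by (rule bint[of "\<lambda>y. Ifun y * cos y"]) (auto simp: Ifun_def abs_cos_le_one)
      have i2: "integrable M (\<lambda>\<omega>. Ifun (\<phi> 1 \<omega>) * sin (\<phi> 1 \<omega>))"
        by (rule bint[of "\<lambda>y. Ifun y * sin y"]) (auto simp: Ifun_def abs_sin_le_one)
      show ?thesis unfolding \<kappa>0_def using i1 i2 by simp
    qed
    also have "\<dots> = sin a * \<kappa>0" using odd0 by simp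
    finally show "(\<integral>\<omega>. fZ t (Tr 1 \<omega>) \<partial>M) = EF * \<kappa>0 * (G * sin (w0 * t + \<theta>))"
      unfolding a_def by simp
  qed
  have intI: "integrable M (\<lambda>\<omega>. fI (Tr 1 \<omega>))"
    unfolding fI_def Tr_def using bint[OF Ifun_meas Ifun_bnd] by simp
  have EI: "(\<integral>\<omega>. fI (Tr 1 \<omega>) \<partial>M) = 1 / 2" unfolding fI_def Tr_def using pI by simp
  have card_eq: "real (card (Xplus \<phi> m \<omega>)) = (\<Sum>i<m. fI (Tr (Suc i) \<omega>))" for m \<omega>
  proof -
    have "card (Xplus \<phi> m \<omega>) = (\<Sum>i\<in>Xplus \<phi> m \<omega>. 1::nat)" by (rule card_eq_sum)
    then have "real (card (Xplus \<phi> m \<omega>)) = (\<Sum>i\<in>Xplus \<phi> m \<omega>. 1::real)" by (simp only: of_nat_sum of_nat_1)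
    also have "\<dots> = (\<Sum>i\<in>{Suc 0..m}. if \<bar>\<phi> i \<omega>\<bar> \<le> pi / 2 then 1 else 0)"
      unfolding Xplus_def by (subst sum.inter_filter) auto
    also have "\<dots> = (\<Sum>i<m. fI (Tr (Suc i) \<omega>))"
      by (subst sum.atLeast1_atMost_eq) (simp add: fI_def Tr_def Ifun_def)
    finally show ?thesis .
  qed
  have sum_eq: "(\<Sum>i\<in>Xplus \<phi> m \<omega>. chan_out G w0 \<theta> F \<phi> n i t \<omega>) = (\<Sum>i<m. fZ t (Tr (Suc i) \<omega>))" for m \<omega> t
  proof -
    have "(\<Sum>i\<in>Xplus \<phi> m \<omega>. chan_out G w0 \<theta> F \<phi> n i t \<omega>)
        = (\<Sum>i\<in>{Suc 0..m}. if \<bar>\<phi> i \<omega>\<bar> \<le> pi / 2 then chan_out G w0 \<theta> F \<phi> n i t \<omega> else 0)"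
      unfolding Xplus_def by (subst sum.inter_filter) auto
    also have "\<dots> = (\<Sum>i<m. fZ t (Tr (Suc i) \<omega>))"
      by (subst sum.atLeast1_atMost_eq) (intro sum.cong refl, simp add: fZ_def Tr_def chan_out_def)
    finally show ?thesis .
  qed
  show ?thesis
  proof (intro exI allI)
    fix t
    have s1: "AE \<omega> in M. (\<lambda>m. (\<Sum>i<m. fI (Tr (Suc i) \<omega>)) / real m) \<longlonglongrightarrow> 1 / 2"
      using P.slln_shift[OF ind idd fI_meas intI] unfolding EI .
    have s2: "AE \<omega> in M. (\<lambda>m. (\<Sum>i<m. fZ t (Tr (Suc i) \<omega>)) / real m) \<longlonglongrightarrow> EF * \<kappa>0 * (G * sin (w0 * t + \<theta>))"
      using P.slln_shift[OF ind idd fZ_meas intZ] unfolding EZ .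
    show "AE \<omega> in M. (\<lambda>m. g_hat G w0 \<theta> F \<phi> n m t \<omega>) \<longlonglongrightarrow> (2 * EF * \<kappa>0) * sig_in G w0 \<theta> t
             \<and> filterlim (\<lambda>m. card (Xplus \<phi> m \<omega>)) at_top sequentially"
    proof (rule AE_mp[OF AE_conj_iff[THEN iffD2, OF conjI[OF s1 s2]] AE_I2[OF impI]])
      fix \<omega>
      assume H: "(\<lambda>m. (\<Sum>i<m. fI (Tr (Suc i) \<omega>)) / real m) \<longlonglongrightarrow> 1 / 2 \<and>
          (\<lambda>m. (\<Sum>i<m. fZ t (Tr (Suc i) \<omega>)) / real m) \<longlonglongrightarrow> EF * \<kappa>0 * (G * sin (w0 * t + \<theta>))"
      define A where "A m = (\<Sum>i<m. fI (Tr (Suc i) \<omega>))" for m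
      define B where "B m = (\<Sum>i<m. fZ t (Tr (Suc i) \<omega>))" for m
      have HA: "(\<lambda>m. A m / real m) \<longlonglongrightarrow> 1 / 2" using H unfolding A_def by simp
      have HB: "(\<lambda>m. B m / real m) \<longlonglongrightarrow> EF * \<kappa>0 * (G * sin (w0 * t + \<theta>))" using H unfolding B_def by simp
      have gh: "g_hat G w0 \<theta> F \<phi> n m t \<omega> = B m / A m" for m
        unfolding g_hat_def A_def B_def by (simp add: sum_eq card_eq)
      have "(\<lambda>m. (B m / real m) / (A m / real m)) \<longlonglongrightarrow> (EF * \<kappa>0 * (G * sin (w0 * t + \<theta>))) / (1 / 2)"
        by (rule tendsto_divide[OF HB HA]) simp
      moreover have "eventually (\<lambda>m. (B m / real m) / (A m / real m) = g_hat G w0 \<theta> F \<phi> n m t \<omega>) sequentially"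
        unfolding eventually_sequentially gh
        by (rule exI[of _ 1]) (auto simp: field_simps)
      ultimately have L1: "(\<lambda>m. g_hat G w0 \<theta> F \<phi> n m t \<omega>) \<longlonglongrightarrow> (EF * \<kappa>0 * (G * sin (w0 * t + \<theta>))) / (1 / 2)"
        by (rule Lim_transform_eventually)
      have eqc: "(EF * \<kappa>0 * (G * sin (w0 * t + \<theta>))) / (1 / 2) = (2 * EF * \<kappa>0) * sig_in G w0 \<theta> t"
        unfolding sig_in_def by simp
      from L1 have L1': "(\<lambda>m. g_hat G w0 \<theta> F \<phi> n m t \<omega>) \<longlonglongrightarrow> (2 * EF * \<kappa>0) * sig_in G w0 \<theta> t" unfolding eqc .
      have fl: "filterlim (\<lambda>m. A m / real m * real m) at_top sequentially"
        by (rule filterlim_tendsto_pos_mult_at_top[OF HA _ filterlim_real_sequentially]) simp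
      have ev: "eventually (\<lambda>m. A m / real m * real m = real (card (Xplus \<phi> m \<omega>))) sequentially"
        unfolding eventually_sequentially card_eq A_def by (rule exI[of _ 1]) auto
      have "filterlim (\<lambda>m. real (card (Xplus \<phi> m \<omega>))) at_top sequentially"
        using fl filterlim_cong[OF refl refl ev] by simp
      then have L2: "filterlim (\<lambda>m. card (Xplus \<phi> m \<omega>)) at_top sequentially"
        by (simp add: filterlim_sequentially_iff_filterlim_real)
      show "(\<lambda>m. g_hat G w0 \<theta> F \<phi> n m t \<omega>) \<longlonglongrightarrow> (2 * EF * \<kappa>0) * sig_in G w0 \<theta> t
             \<and> filterlim (\<lambda>m. card (Xplus \<phi> m \<omega>)) at_top sequentially"
        using L1' L2 by simp
    qed
  qed
qed

end
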